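(* Let $G$ be a finite group, $N\trianglelefteq G$, and $H=\Delta_G(1\times N)=\{(gn,g):g\in G,n\in N\}$. Then the assignment sending a pair $(\lambda,\mu)$ to the 2-cocycle $\psi((gn,g),(kn',k)):=\mu(n^k,n')/\lambda(k,n)$ induces a group isomorphism $\Lambda(G,N)\cong\mathcal{G}(G,N)$, whose inverse sends $[\psi]$ (with $\psi$ well-chosen) to the class of $\lambda(g,n)=\beta^\psi_{(g,g)}((n,1))$, $\mu(n,n')=\psi((n,1),(n',1))$.
   Context: $n^g=g^{-1}ng$. For $\psi\in Z^2(X;\mathbb{T})$, $\beta^\psi_x(y)=\psi(x,x^{-1}yx)\overline{\psi(y,x)}$. Jones' characteristic invariant $\Lambda(G,N)$: let $Z$ be the abelian group (under pointwise multiplication) of pairs $(\lambda,\mu)$, $\lambda:G\times N\to\mathbb{T}$, $\mu\in Z^2(N;\mathbb{T})$, satisfying for all $m,n\in N$, $g,h\in G$: $\lambda(m,n)=\mu(m,n^m)\overline{\mu(n,m)}$; $\lambda(gh,n)=\lambda(g,n)\lambda(h,n^g)$; $\lambda(g,mn)\overline{\lambda(g,m)\lambda(g,n)}=\mu(m,n)\overline{\mu(m^g,n^g)}$; $\lambda(1,n)=\lambda(g,1)=\mu(1,n)=\mu(n,1)=1$. For $\eta:N\to\mathbb{T}$ with $\eta(1)=1$ let $\lambda_\eta(g,n)=\eta(n)\overline{\eta(n^g)}$, $\mu_\eta(n,n')=\eta(nn')\overline{\eta(n)\eta(n')}$; $\Lambda(G,N)$ is $Z$ modulo the subgroup of all $(\lambda_\eta,\mu_\eta)$.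 $\mathcal{G}(G,N)$ is the subgroup of $H^2(H;\mathbb{T})$ of classes $[\psi]$ with $[\psi|_{\Delta_G}]=1$ and $\beta^\psi_{(n,1)}((1,n'))=1$ for all $n,n'\in N$. A cocycle $\psi\in Z^2(H;\mathbb{T})$ is well-chosen if $\psi(\Delta_G,H)=1$ and $\beta^\psi_{(n,1)}((1,n'))=1$ for all $n,n'\in N$; every class in $\mathcal{G}(G,N)$ contains a well-chosen cocycle. *)

theory Defs
  imports Complex_Main "HOL-Algebra.Algebra"
begin

definition circle :: "complex set" where
  "circle = {z. cmod z = 1}"

text \<open>Conjugation convention: n^g = g^{-1} n g.\<close>
definition conjg :: "('g,'m) monoid_scheme \<Rightarrow> 'g \<Rightarrow> 'g \<Rightarrow> 'g" where
  "conjg K n g = m_inv K g \<otimes>\<^bsub>K\<^esub> n \<otimes>\<^bsub>K\<^esub> g"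

text \<open>Z^2(K;T): (inhomogeneous) 2-cocycles K x K -> T, only the values on the carrier matter.\<close>
definition cocycles :: "('g,'m) monoid_scheme \<Rightarrow> ('g \<Rightarrow> 'g \<Rightarrow> complex) set" where
  "cocycles K = {\<psi>. (\<forall>x\<in>carrier K. \<forall>y\<in>carrier K. \<psi> x y \<in> circle) \<and>
     (\<forall>x\<in>carrier K. \<forall>y\<in>carrier K. \<forall>z\<in>carrier K.
        \<psi> x y * \<psi> (x \<otimes>\<^bsub>K\<^esub> y) z = \<psi> y z * \<psi> x (y \<otimes>\<^bsub>K\<^esub> z))}"

definition cohomologous :: "('g,'m) monoid_scheme \<Rightarrow> ('g \<Rightarrow> 'g \<Rightarrow> complex) \<Rightarrow> ('g \<Rightarrow> 'g \<Rightarrow> complex) \<Rightarrow> bool" where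
  "cohomologous K \<psi> \<psi>' \<longleftrightarrow> (\<exists>\<eta>. (\<forall>x\<in>carrier K. \<eta> x \<in> circle) \<and>
     (\<forall>x\<in>carrier K. \<forall>y\<in>carrier K. \<psi>' x y = \<psi> x y * \<eta> x * \<eta> y / \<eta> (x \<otimes>\<^bsub>K\<^esub> y)))"

definition coh_class :: "('g,'m) monoid_scheme \<Rightarrow> ('g \<Rightarrow> 'g \<Rightarrow> complex) \<Rightarrow> ('g \<Rightarrow> 'g \<Rightarrow> complex) set" where
  "coh_class K \<psi> = {\<psi>' \<in> cocycles K. cohomologous K \<psi> \<psi>'}"

definition H2 :: "('g,'m) monoid_scheme \<Rightarrow> ('g \<Rightarrow> 'g \<Rightarrow> complex) set monoid" where
  "H2 K = \<lparr> carrier = coh_class K ` cocycles K,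
            monoid.mult = (\<lambda>A B. coh_class K (\<lambda>x y. (SOME a. a \<in> A) x y * (SOME b. b \<in> B) x y)),
            monoid.one = coh_class K (\<lambda>x y. 1) \<rparr>"

definition beta :: "('g,'m) monoid_scheme \<Rightarrow> ('g \<Rightarrow> 'g \<Rightarrow> complex) \<Rightarrow> 'g \<Rightarrow> 'g \<Rightarrow> complex" where
  "beta K \<psi> x y = \<psi> x (m_inv K x \<otimes>\<^bsub>K\<^esub> y \<otimes>\<^bsub>K\<^esub> x) * cnj (\<psi> y x)"

definition Hset :: "('a,'b) monoid_scheme \<Rightarrow> 'a set \<Rightarrow> ('a \<times> 'a) set" where
  "Hset G N = {(g \<otimes>\<^bsub>G\<^esub> n, g) | g n. g \<in> carrier G \<and> n \<in> N}"

definition Hgrp :: "('a,'b) monoid_scheme \<Rightarrow> 'a set \<Rightarrow> ('a \<times> 'a) monoid" where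
  "Hgrp G N = (G \<times>\<times> G)\<lparr>carrier := Hset G N\<rparr>"

definition Delta :: "('a,'b) monoid_scheme \<Rightarrow> ('a \<times> 'a) monoid" where
  "Delta G = (G \<times>\<times> G)\<lparr>carrier := {(g, g) | g. g \<in> carrier G}\<rparr>"

definition GGN_carrier :: "('a,'b) monoid_scheme \<Rightarrow> 'a set \<Rightarrow> (('a \<times> 'a) \<Rightarrow> ('a \<times> 'a) \<Rightarrow> complex) set set" where
  "GGN_carrier G N = {C \<in> carrier (H2 (Hgrp G N)). \<exists>\<psi>. \<psi> \<in> cocycles (Hgrp G N) \<and> C = coh_class (Hgrp G N) \<psi>
       \<and> cohomologous (Delta G) (\<lambda>x y. 1) \<psi>
       \<and> (\<forall>n\<in>N. \<forall>n'\<in>N. beta (Hgrp G N) \<psi> (n, \<one>\<^bsub>G\<^esub>) (\<one>\<^bsub>G\<^esub>, n') = 1)}"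

definition GGN :: "('a,'b) monoid_scheme \<Rightarrow> 'a set \<Rightarrow> (('a \<times> 'a) \<Rightarrow> ('a \<times> 'a) \<Rightarrow> complex) set monoid" where
  "GGN G N = (H2 (Hgrp G N))\<lparr>carrier := GGN_carrier G N\<rparr>"

definition well_chosen :: "('a,'b) monoid_scheme \<Rightarrow> 'a set \<Rightarrow> (('a \<times> 'a) \<Rightarrow> ('a \<times> 'a) \<Rightarrow> complex) \<Rightarrow> bool" where
  "well_chosen G N \<psi> \<longleftrightarrow> \<psi> \<in> cocycles (Hgrp G N)
     \<and> (\<forall>g\<in>carrier G. \<forall>h\<in>Hset G N. \<psi> (g, g) h = 1)
     \<and> (\<forall>n\<in>N. \<forall>n'\<in>N. beta (Hgrp G N) \<psi> (n, \<one>\<^bsub>G\<^esub>) (\<one>\<^bsub>G\<^esub>, n') = 1)"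

type_synonym 'a lampair = "('a \<Rightarrow> 'a \<Rightarrow> complex) \<times> ('a \<Rightarrow> 'a \<Rightarrow> complex)"

definition Zpairs :: "('a,'b) monoid_scheme \<Rightarrow> 'a set \<Rightarrow> 'a lampair set" where
  "Zpairs G N = {(la, mu).
     (\<forall>g\<in>carrier G. \<forall>n\<in>N. la g n \<in> circle) \<and>
     mu \<in> cocycles (G\<lparr>carrier := N\<rparr>) \<and>
     (\<forall>m\<in>N. \<forall>n\<in>N. la m n = mu m (conjg G n m) * cnj (mu n m)) \<and>
     (\<forall>g\<in>carrier G. \<forall>h\<in>carrier G. \<forall>n\<in>N. la (g \<otimes>\<^bsub>G\<^esub> h) n = la g n * la h (conjg G n g)) \<and>
     (\<forall>g\<in>carrier G. \<forall>m\<in>N. \<forall>n\<in>N.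
        la g (m \<otimes>\<^bsub>G\<^esub> n) * cnj (la g m * la g n) = mu m n * cnj (mu (conjg G m g) (conjg G n g))) \<and>
     (\<forall>n\<in>N. la \<one>\<^bsub>G\<^esub> n = 1) \<and> (\<forall>g\<in>carrier G. la g \<one>\<^bsub>G\<^esub> = 1) \<and>
     (\<forall>n\<in>N. mu \<one>\<^bsub>G\<^esub> n = 1) \<and> (\<forall>n\<in>N. mu n \<one>\<^bsub>G\<^esub> = 1)}"

definition lam_equiv :: "('a,'b) monoid_scheme \<Rightarrow> 'a set \<Rightarrow> 'a lampair \<Rightarrow> 'a lampair \<Rightarrow> bool" where
  "lam_equiv G N p q \<longleftrightarrow> (\<exists>\<eta>. (\<forall>n\<in>N. \<eta> n \<in> circle) \<and> \<eta> \<one>\<^bsub>G\<^esub> = 1 \<and>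
     (\<forall>g\<in>carrier G. \<forall>n\<in>N. fst q g n = fst p g n * (\<eta> n * cnj (\<eta> (conjg G n g)))) \<and>
     (\<forall>n\<in>N. \<forall>n'\<in>N. snd q n n' = snd p n n' * (\<eta> (n \<otimes>\<^bsub>G\<^esub> n') * cnj (\<eta> n * \<eta> n'))))"

definition lam_class :: "('a,'b) monoid_scheme \<Rightarrow> 'a set \<Rightarrow> 'a lampair \<Rightarrow> 'a lampair set" where
  "lam_class G N p = {q \<in> Zpairs G N. lam_equiv G N p q}"

definition Lambda :: "('a,'b) monoid_scheme \<Rightarrow> 'a set \<Rightarrow> 'a lampair set monoid" where
  "Lambda G N = \<lparr> carrier = lam_class G N ` Zpairs G N,
     monoid.mult = (\<lambda>A B. lam_class G N
        (let p = (SOME p. p \<in> A); q = (SOME q. q \<in> B)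
         in (\<lambda>g n. fst p g n * fst q g n, \<lambda>n n'. snd p n n' * snd q n n'))),
     monoid.one = lam_class G N (\<lambda>g n. 1, \<lambda>n n'. 1) \<rparr>"

text \<open>\<psi>((gn,g),(kn',k)) = \<mu>(n^k, n') / \<lambda>(k, n); for (a,b) in H we have g = b, n = b^{-1} a.\<close>
definition psi_of :: "('a,'b) monoid_scheme \<Rightarrow> 'a lampair \<Rightarrow> ('a \<times> 'a) \<Rightarrow> ('a \<times> 'a) \<Rightarrow> complex" where
  "psi_of G p x y =
     (let g = snd x; n = m_inv G (snd x) \<otimes>\<^bsub>G\<^esub> fst x;
          k = snd y; n' = m_inv G (snd y) \<otimes>\<^bsub>G\<^esub> fst y
      in snd p (conjg G n k) n' / fst p k n)"

definition lam_of :: "('a,'b) monoid_scheme \<Rightarrow> 'a set \<Rightarrow> (('a \<times> 'a) \<Rightarrow> ('a \<times> 'a) \<Rightarrow> complex) \<Rightarrow> 'a lampair" where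
  "lam_of G N \<psi> = (\<lambda>g n. beta (Hgrp G N) \<psi> (g, g) (n, \<one>\<^bsub>G\<^esub>), \<lambda>n n'. \<psi> (n, \<one>\<^bsub>G\<^esub>) (n', \<one>\<^bsub>G\<^esub>))"

end

theory Submission
  imports Defs
begin


lemma circle_iff: "z \<in> circle \<longleftrightarrow> cmod z = 1" by (simp add: circle_def)
lemma circle_nz: "z \<in> circle \<Longrightarrow> z \<noteq> 0" by (auto simp: circle_def)
lemma circle_mult: "a \<in> circle \<Longrightarrow> b \<in> circle \<Longrightarrow> a * b \<in> circle"
  by (simp add: circle_def norm_mult)
lemma circle_cnj: "a \<in> circle \<Longrightarrow> cnj a \<in> circle" by (simp add: circle_def)
lemma circle_inv: "a \<in> circle \<Longrightarrow> inverse a \<in> circle" by (simp add: circle_def norm_inverse)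
lemma circle_div: "a \<in> circle \<Longrightarrow> b \<in> circle \<Longrightarrow> a / b \<in> circle"
  by (simp add: circle_def norm_divide)
lemma circle_one[simp]: "1 \<in> circle" by (simp add: circle_def)
lemma cnj_circle: "a \<in> circle \<Longrightarrow> cnj a = 1 / a"
proof -
  assume a: "a \<in> circle"
  have "a * cnj a = 1" using a complex_norm_square[of a] by (simp add: circle_def)
  thus ?thesis using circle_nz[OF a] by (simp add: field_simps)
qed

lemma coh_refl: "cohomologous K \<psi> \<psi>"
  unfolding cohomologous_def by (rule exI[of _ "\<lambda>_. 1"]) simp

lemma coh_eq_on: "(\<forall>x\<in>carrier K. \<forall>y\<in>carrier K. \<psi>' x y = \<psi> x y) \<Longrightarrow> cohomologous K \<psi> \<psi>'"
  unfolding cohomologous_def by (rule exI[of _ "\<lambda>_. 1"]) simp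

lemma coh_sym:
  assumes "monoid K" "cohomologous K \<psi> \<psi>'" shows "cohomologous K \<psi>' \<psi>"
proof -
  obtain \<eta> where e: "\<forall>x\<in>carrier K. \<eta> x \<in> circle"
    "\<forall>x\<in>carrier K. \<forall>y\<in>carrier K. \<psi>' x y = \<psi> x y * \<eta> x * \<eta> y / \<eta> (x \<otimes>\<^bsub>K\<^esub> y)"
    using assms(2) unfolding cohomologous_def by blast
  show ?thesis unfolding cohomologous_def
  proof (intro exI[of _ "\<lambda>x. 1 / \<eta> x"] conjI ballI)
    fix x assume "x \<in> carrier K" thus "1 / \<eta> x \<in> circle" using e by (simp add: circle_div)
  next
    fix x y assume xy: "x \<in> carrier K" "y \<in> carrier K"
    hence "x \<otimes>\<^bsub>K\<^esub> y \<in> carrier K" using monoid.m_closed[OF assms(1)] by blast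
    thus "\<psi> x y = \<psi>' x y * (1 / \<eta> x) * (1 / \<eta> y) / (1 / \<eta> (x \<otimes>\<^bsub>K\<^esub> y))"
      using xy e circle_nz by (simp add: field_simps)
  qed
qed

lemma coh_trans:
  assumes "cohomologous K \<psi>1 \<psi>2" "cohomologous K \<psi>2 \<psi>3" shows "cohomologous K \<psi>1 \<psi>3"
proof -
  obtain \<eta> where e: "\<forall>x\<in>carrier K. \<eta> x \<in> circle"
    "\<forall>x\<in>carrier K. \<forall>y\<in>carrier K. \<psi>2 x y = \<psi>1 x y * \<eta> x * \<eta> y / \<eta> (x \<otimes>\<^bsub>K\<^esub> y)"
    using assms(1) unfolding cohomologous_def by blast
  obtain \<zeta> where z: "\<forall>x\<in>carrier K. \<zeta> x \<in> circle"
    "\<forall>x\<in>carrier K. \<forall>y\<in>carrier K. \<psi>3 x y = \<psi>2 x y * \<zeta> x * \<zeta> y / \<zeta> (x \<otimes>\<^bsub>K\<^esub> y)"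
    using assms(2) unfolding cohomologous_def by blast
  show ?thesis unfolding cohomologous_def
  proof (intro exI[of _ "\<lambda>x. \<eta> x * \<zeta> x"] conjI ballI)
    fix x assume "x \<in> carrier K" thus "\<eta> x * \<zeta> x \<in> circle" using e z by (simp add: circle_mult)
  next
    fix x y assume "x \<in> carrier K" "y \<in> carrier K"
    hence "\<psi>3 x y = \<psi>1 x y * \<eta> x * \<eta> y / \<eta> (x \<otimes>\<^bsub>K\<^esub> y) * \<zeta> x * \<zeta> y / \<zeta> (x \<otimes>\<^bsub>K\<^esub> y)"
      using e(2) z(2) by simp
    thus "\<psi>3 x y = \<psi>1 x y * (\<eta> x * \<zeta> x) * (\<eta> y * \<zeta> y) / (\<eta> (x \<otimes>\<^bsub>K\<^esub> y) * \<zeta> (x \<otimes>\<^bsub>K\<^esub> y))"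
      by (simp add: divide_inverse mult_ac inverse_mult_distrib)
  qed
qed

lemma coh_mult:
  assumes "cohomologous K \<psi>1 \<psi>1'" "cohomologous K \<psi>2 \<psi>2'"
  shows "cohomologous K (\<lambda>x y. \<psi>1 x y * \<psi>2 x y) (\<lambda>x y. \<psi>1' x y * \<psi>2' x y)"
proof -
  obtain \<eta> where e: "\<forall>x\<in>carrier K. \<eta> x \<in> circle"
    "\<forall>x\<in>carrier K. \<forall>y\<in>carrier K. \<psi>1' x y = \<psi>1 x y * \<eta> x * \<eta> y / \<eta> (x \<otimes>\<^bsub>K\<^esub> y)"
    using assms(1) unfolding cohomologous_def by blast
  obtain \<zeta> where z: "\<forall>x\<in>carrier K. \<zeta> x \<in> circle"
    "\<forall>x\<in>carrier K. \<forall>y\<in>carrier K. \<psi>2' x y = \<psi>2 x y * \<zeta> x * \<zeta> y / \<zeta> (x \<otimes>\<^bsub>K\<^esub> y)"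
    using assms(2) unfolding cohomologous_def by blast
  show ?thesis unfolding cohomologous_def
  proof (intro exI[of _ "\<lambda>x. \<eta> x * \<zeta> x"] conjI ballI)
    fix x assume "x \<in> carrier K" thus "\<eta> x * \<zeta> x \<in> circle" using e z by (simp add: circle_mult)
  next
    fix x y assume "x \<in> carrier K" "y \<in> carrier K"
    thus "\<psi>1' x y * \<psi>2' x y = \<psi>1 x y * \<psi>2 x y * (\<eta> x * \<zeta> x) * (\<eta> y * \<zeta> y) / (\<eta> (x \<otimes>\<^bsub>K\<^esub> y) * \<zeta> (x \<otimes>\<^bsub>K\<^esub> y))"
      using e(2) z(2) by (simp add: divide_inverse mult_ac inverse_mult_distrib)
  qed
qed

lemma cocycles_mult:
  assumes "\<psi> \<in> cocycles K" "\<psi>' \<in> cocycles K"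
  shows "(\<lambda>x y. \<psi> x y * \<psi>' x y) \<in> cocycles K"
  unfolding cocycles_def
proof (intro CollectI conjI ballI)
  fix x y assume "x \<in> carrier K" "y \<in> carrier K"
  thus "\<psi> x y * \<psi>' x y \<in> circle" using assms by (simp add: cocycles_def circle_mult)
next
  fix x y z assume xyz: "x \<in> carrier K" "y \<in> carrier K" "z \<in> carrier K"
  have 1: "\<psi> x y * \<psi> (x \<otimes>\<^bsub>K\<^esub> y) z = \<psi> y z * \<psi> x (y \<otimes>\<^bsub>K\<^esub> z)"
    using assms(1) xyz unfolding cocycles_def by blast
  have 2: "\<psi>' x y * \<psi>' (x \<otimes>\<^bsub>K\<^esub> y) z = \<psi>' y z * \<psi>' x (y \<otimes>\<^bsub>K\<^esub> z)"
    using assms(2) xyz unfolding cocycles_def by blast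
  have "\<psi> x y * \<psi>' x y * (\<psi> (x \<otimes>\<^bsub>K\<^esub> y) z * \<psi>' (x \<otimes>\<^bsub>K\<^esub> y) z)
     = (\<psi> x y * \<psi> (x \<otimes>\<^bsub>K\<^esub> y) z) * (\<psi>' x y * \<psi>' (x \<otimes>\<^bsub>K\<^esub> y) z)" by (simp only: mult_ac)
  also have "\<dots> = (\<psi> y z * \<psi> x (y \<otimes>\<^bsub>K\<^esub> z)) * (\<psi>' y z * \<psi>' x (y \<otimes>\<^bsub>K\<^esub> z))" by (simp only: 1 2)
  also have "\<dots> = \<psi> y z * \<psi>' y z * (\<psi> x (y \<otimes>\<^bsub>K\<^esub> z) * \<psi>' x (y \<otimes>\<^bsub>K\<^esub> z))" by (simp only: mult_ac)
  finally show "\<psi> x y * \<psi>' x y * (\<psi> (x \<otimes>\<^bsub>K\<^esub> y) z * \<psi>' (x \<otimes>\<^bsub>K\<^esub> y) z) =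
        \<psi> y z * \<psi>' y z * (\<psi> x (y \<otimes>\<^bsub>K\<^esub> z) * \<psi>' x (y \<otimes>\<^bsub>K\<^esub> z))" .
qed

lemma coc_alg:
  fixes A B C D ex ey ez exy eyz exyz :: complex
  assumes "ex \<noteq> 0" "ey \<noteq> 0" "ez \<noteq> 0" "exy \<noteq> 0" "eyz \<noteq> 0" "exyz \<noteq> 0" "A * B = C * D"
  shows "A * ex * ey / exy * (B * exy * ez / exyz) = C * ey * ez / eyz * (D * ex * eyz / exyz)"
proof -
  have "A * ex * ey / exy * (B * exy * ez / exyz) = (A * B) * (ex * ey * ez / exyz)"
    using assms by (simp add: field_simps)
  also have "\<dots> = (C * D) * (ex * ey * ez / exyz)" using assms by simp
  also have "\<dots> = C * ey * ez / eyz * (D * ex * eyz / exyz)" using assms by (simp add: field_simps)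
  finally show ?thesis .
qed

lemma coh_cocycle:
  assumes "monoid K" "\<psi> \<in> cocycles K" "cohomologous K \<psi> \<psi>'" shows "\<psi>' \<in> cocycles K"
proof -
  obtain \<eta> where e: "\<forall>x\<in>carrier K. \<eta> x \<in> circle"
    "\<forall>x\<in>carrier K. \<forall>y\<in>carrier K. \<psi>' x y = \<psi> x y * \<eta> x * \<eta> y / \<eta> (x \<otimes>\<^bsub>K\<^esub> y)"
    using assms(3) unfolding cohomologous_def by blast
  have c: "\<forall>x\<in>carrier K. \<forall>y\<in>carrier K. \<psi> x y \<in> circle"
    "\<forall>x\<in>carrier K. \<forall>y\<in>carrier K. \<forall>z\<in>carrier K.
        \<psi> x y * \<psi> (x \<otimes>\<^bsub>K\<^esub> y) z = \<psi> y z * \<psi> x (y \<otimes>\<^bsub>K\<^esub> z)"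
    using assms(2) unfolding cocycles_def by auto
  note mc = monoid.m_closed[OF assms(1)]
  show ?thesis unfolding cocycles_def
  proof (intro CollectI conjI ballI)
    fix x y assume "x \<in> carrier K" "y \<in> carrier K"
    thus "\<psi>' x y \<in> circle" using e(1) c(1) mc e(2)[rule_format, of x y]
      by (simp add: circle_mult circle_div)
  next
    fix x y z assume xyz: "x \<in> carrier K" "y \<in> carrier K" "z \<in> carrier K"
    have 1: "\<psi> x y * \<psi> (x \<otimes>\<^bsub>K\<^esub> y) z = \<psi> y z * \<psi> x (y \<otimes>\<^bsub>K\<^esub> z)" using c xyz by blast
    have as: "x \<otimes>\<^bsub>K\<^esub> y \<otimes>\<^bsub>K\<^esub> z = x \<otimes>\<^bsub>K\<^esub> (y \<otimes>\<^bsub>K\<^esub> z)"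
      using monoid.m_assoc[OF assms(1)] xyz by blast
    have nz: "\<eta> x \<noteq> 0" "\<eta> y \<noteq> 0" "\<eta> z \<noteq> 0" "\<eta> (x \<otimes>\<^bsub>K\<^esub> y) \<noteq> 0" "\<eta> (y \<otimes>\<^bsub>K\<^esub> z) \<noteq> 0"
      "\<eta> (x \<otimes>\<^bsub>K\<^esub> (y \<otimes>\<^bsub>K\<^esub> z)) \<noteq> 0"
    proof -
      have cl: "x \<otimes>\<^bsub>K\<^esub> y \<in> carrier K" "y \<otimes>\<^bsub>K\<^esub> z \<in> carrier K"
        "x \<otimes>\<^bsub>K\<^esub> (y \<otimes>\<^bsub>K\<^esub> z) \<in> carrier K"
        using xyz monoid.m_closed[OF assms(1)] by simp_all
      show "\<eta> x \<noteq> 0" "\<eta> y \<noteq> 0" "\<eta> z \<noteq> 0" "\<eta> (x \<otimes>\<^bsub>K\<^esub> y) \<noteq> 0" "\<eta> (y \<otimes>\<^bsub>K\<^esub> z) \<noteq> 0"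
        "\<eta> (x \<otimes>\<^bsub>K\<^esub> (y \<otimes>\<^bsub>K\<^esub> z)) \<noteq> 0"
        using e(1) xyz cl circle_nz by simp_all
    qed
    have e1: "\<psi>' x y = \<psi> x y * \<eta> x * \<eta> y / \<eta> (x \<otimes>\<^bsub>K\<^esub> y)"
      "\<psi>' (x \<otimes>\<^bsub>K\<^esub> y) z = \<psi> (x \<otimes>\<^bsub>K\<^esub> y) z * \<eta> (x \<otimes>\<^bsub>K\<^esub> y) * \<eta> z / \<eta> (x \<otimes>\<^bsub>K\<^esub> (y \<otimes>\<^bsub>K\<^esub> z))"
      "\<psi>' y z = \<psi> y z * \<eta> y * \<eta> z / \<eta> (y \<otimes>\<^bsub>K\<^esub> z)"
      "\<psi>' x (y \<otimes>\<^bsub>K\<^esub> z) = \<psi> x (y \<otimes>\<^bsub>K\<^esub> z) * \<eta> x * \<eta> (y \<otimes>\<^bsub>K\<^esub> z) / \<eta> (x \<otimes>\<^bsub>K\<^esub> (y \<otimes>\<^bsub>K\<^esub> z))"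
      using e(2)[rule_format, of x y] e(2)[rule_format, of "x \<otimes>\<^bsub>K\<^esub> y" z]
        e(2)[rule_format, of y z] e(2)[rule_format, of x "y \<otimes>\<^bsub>K\<^esub> z"] xyz mc as by simp_all
    show "\<psi>' x y * \<psi>' (x \<otimes>\<^bsub>K\<^esub> y) z = \<psi>' y z * \<psi>' x (y \<otimes>\<^bsub>K\<^esub> z)"
      unfolding e1 by (rule coc_alg[OF nz 1])
  qed
qed

lemma in_class: "\<psi> \<in> cocycles K \<Longrightarrow> \<psi> \<in> coh_class K \<psi>"
  by (simp add: coh_class_def coh_refl)

lemma class_eq:
  assumes "monoid K" "cohomologous K \<psi> \<psi>'" shows "coh_class K \<psi> = coh_class K \<psi>'"
  unfolding coh_class_def using coh_trans coh_sym[OF assms(1)] assms(2) by blast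

lemma class_eqD:
  assumes "\<psi>' \<in> cocycles K" "coh_class K \<psi> = coh_class K \<psi>'" shows "cohomologous K \<psi> \<psi>'"
proof -
  have "\<psi>' \<in> coh_class K \<psi>" using in_class[OF assms(1)] assms(2) by simp
  thus ?thesis by (simp add: coh_class_def)
qed

lemma some_class: "\<psi> \<in> cocycles K \<Longrightarrow> cohomologous K \<psi> (SOME a. a \<in> coh_class K \<psi>)"
  using someI[of "\<lambda>a. a \<in> coh_class K \<psi>", OF in_class] by (simp add: coh_class_def)

lemma H2_mult:
  assumes "monoid K" "\<psi> \<in> cocycles K" "\<psi>' \<in> cocycles K"
  shows "coh_class K \<psi> \<otimes>\<^bsub>H2 K\<^esub> coh_class K \<psi>' = coh_class K (\<lambda>x y. \<psi> x y * \<psi>' x y)"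
proof -
  have "cohomologous K (\<lambda>x y. \<psi> x y * \<psi>' x y)
     (\<lambda>x y. (SOME a. a \<in> coh_class K \<psi>) x y * (SOME b. b \<in> coh_class K \<psi>') x y)"
    by (rule coh_mult[OF some_class some_class]) (use assms in auto)
  thus ?thesis by (simp add: H2_def class_eq[OF assms(1)])
qed

lemma beta_coh:
  assumes "group K" "cohomologous K \<psi> \<psi>'" "x \<in> carrier K" "y \<in> carrier K"
    "x \<otimes>\<^bsub>K\<^esub> y = y \<otimes>\<^bsub>K\<^esub> x"
  shows "beta K \<psi>' x y = beta K \<psi> x y"
proof -
  interpret K: group K by fact
  obtain \<eta> where e: "\<forall>x\<in>carrier K. \<eta> x \<in> circle"
    "\<forall>x\<in>carrier K. \<forall>y\<in>carrier K. \<psi>' x y = \<psi> x y * \<eta> x * \<eta> y / \<eta> (x \<otimes>\<^bsub>K\<^esub> y)"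
    using assms(2) unfolding cohomologous_def by blast
  have c: "inv\<^bsub>K\<^esub> x \<otimes>\<^bsub>K\<^esub> y \<otimes>\<^bsub>K\<^esub> x = y"
  proof -
    have "inv\<^bsub>K\<^esub> x \<otimes>\<^bsub>K\<^esub> y \<otimes>\<^bsub>K\<^esub> x = inv\<^bsub>K\<^esub> x \<otimes>\<^bsub>K\<^esub> (x \<otimes>\<^bsub>K\<^esub> y)"
      using assms(3-5) by (simp add: K.m_assoc)
    also have "\<dots> = y" using assms(3-4) by (simp add: K.m_assoc[symmetric])
    finally show ?thesis .
  qed
  have xy: "x \<otimes>\<^bsub>K\<^esub> y \<in> carrier K" using assms by simp
  define A where "A = \<eta> x * \<eta> y / \<eta> (x \<otimes>\<^bsub>K\<^esub> y)"
  have Ac: "A \<in> circle" unfolding A_def using e(1) xy assms by (simp add: circle_mult circle_div)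
  have AA: "A * cnj A = 1" using cnj_circle[OF Ac] circle_nz[OF Ac] by simp
  have 1: "\<psi>' x y = \<psi> x y * A" using e(2) assms(3,4) by (simp add: A_def)
  have 2: "\<psi>' y x = \<psi> y x * A" using e(2) assms(3,4,5) by (simp add: A_def mult_ac)
  show ?thesis unfolding beta_def c 1 2
    by (simp add: mult_ac AA)
qed



locale jones = normal N G for N and G (structure)
begin

lemma Nc: "n \<in> N \<Longrightarrow> n \<in> carrier G" by (rule mem_carrier)

lemma cancel1[simp]: "x \<in> carrier G \<Longrightarrow> y \<in> carrier G \<Longrightarrow> x \<otimes> (inv x \<otimes> y) = y"
  by (simp add: m_assoc[symmetric])
lemma cancel2[simp]: "x \<in> carrier G \<Longrightarrow> y \<in> carrier G \<Longrightarrow> inv x \<otimes> (x \<otimes> y) = y"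
  by (simp add: m_assoc[symmetric])

lemma conj_closed[simp]: "n \<in> N \<Longrightarrow> g \<in> carrier G \<Longrightarrow> conjg G n g \<in> N"
  unfolding conjg_def by (rule inv_op_closed1)
lemma conj_carrier[simp]: "n \<in> carrier G \<Longrightarrow> g \<in> carrier G \<Longrightarrow> conjg G n g \<in> carrier G"
  unfolding conjg_def by simp

lemma conjg_conjg: "n \<in> carrier G \<Longrightarrow> k \<in> carrier G \<Longrightarrow> l \<in> carrier G \<Longrightarrow>
   conjg G (conjg G n k) l = conjg G n (k \<otimes> l)"
  unfolding conjg_def by (simp add: inv_mult_group m_assoc)

lemma conjg_mult: "m \<in> carrier G \<Longrightarrow> n \<in> carrier G \<Longrightarrow> g \<in> carrier G \<Longrightarrow>
   conjg G (m \<otimes> n) g = conjg G m g \<otimes> conjg G n g"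
  unfolding conjg_def by (simp add: m_assoc)

lemma conjg_one1[simp]: "g \<in> carrier G \<Longrightarrow> conjg G \<one> g = \<one>"
  unfolding conjg_def by simp
lemma conjg_one2[simp]: "n \<in> carrier G \<Longrightarrow> conjg G n \<one> = n"
  unfolding conjg_def by simp

lemma Hmult_eq: "g \<in> carrier G \<Longrightarrow> n \<in> carrier G \<Longrightarrow> k \<in> carrier G \<Longrightarrow> n' \<in> carrier G \<Longrightarrow>
   g \<otimes> n \<otimes> (k \<otimes> n') = g \<otimes> k \<otimes> (conjg G n k \<otimes> n')"
  unfolding conjg_def by (simp add: m_assoc)

lemma Hset_iff: "(a, b) \<in> Hset G N \<longleftrightarrow> a \<in> carrier G \<and> b \<in> carrier G \<and> inv b \<otimes> a \<in> N"
  unfolding Hset_def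
proof safe
  fix g n assume "g \<in> carrier G" "n \<in> N" thus "g \<otimes> n \<in> carrier G" "inv g \<otimes> (g \<otimes> n) \<in> N" by simp_all
next
  assume "a \<in> carrier G" "b \<in> carrier G" "inv b \<otimes> a \<in> N"
  thus "\<exists>g n. (a, b) = (g \<otimes> n, g) \<and> g \<in> carrier G \<and> n \<in> N"
    by (intro exI[of _ b] exI[of _ "inv b \<otimes> a"]) simp
qed

lemma Hset_mem[simp]: "g \<in> carrier G \<Longrightarrow> n \<in> N \<Longrightarrow> (g \<otimes> n, g) \<in> Hset G N"
  unfolding Hset_def by blast

lemma HsetE:
  assumes "x \<in> Hset G N"
  obtains g n where "x = (g \<otimes> n, g)" "g \<in> carrier G" "n \<in> N"
  using assms unfolding Hset_def by blast

lemma diag_mem[simp]: "g \<in> carrier G \<Longrightarrow> (g, g) \<in> Hset G N"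
  by (simp add: Hset_iff)
lemma n1_mem[simp]: "n \<in> N \<Longrightarrow> (n, \<one>) \<in> Hset G N"
  by (simp add: Hset_iff)
lemma one_n_mem[simp]: "n \<in> N \<Longrightarrow> (\<one>, n) \<in> Hset G N"
  by (simp add: Hset_iff)

lemma GG_group: "group (G \<times>\<times> G)" by (rule DirProd_group[OF is_group is_group])

lemma Hset_sub: "subgroup (Hset G N) (G \<times>\<times> G)"
proof
  show "Hset G N \<subseteq> carrier (G \<times>\<times> G)" by (auto simp: Hset_iff)
next
  fix x y assume "x \<in> Hset G N" "y \<in> Hset G N"
  then obtain g n k n' where xy: "x = (g \<otimes> n, g)" "y = (k \<otimes> n', k)" "g \<in> carrier G" "n \<in> N"
    "k \<in> carrier G" "n' \<in> N" by (metis HsetE)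
  hence "x \<otimes>\<^bsub>G \<times>\<times> G\<^esub> y = (g \<otimes> k \<otimes> (conjg G n k \<otimes> n'), g \<otimes> k)"
    using Hmult_eq[of g n k n'] by simp
  thus "x \<otimes>\<^bsub>G \<times>\<times> G\<^esub> y \<in> Hset G N"
    using xy by simp
next
  show "\<one>\<^bsub>G \<times>\<times> G\<^esub> \<in> Hset G N" by simp
next
  fix x assume "x \<in> Hset G N"
  then obtain g n where x: "x = (g \<otimes> n, g)" "g \<in> carrier G" "n \<in> N" by (metis HsetE)
  have "inv\<^bsub>G \<times>\<times> G\<^esub> x = (inv n \<otimes> inv g, inv g)"
    using x by (simp add: inv_DirProd[OF is_group is_group] inv_mult_group)
  also have "\<dots> \<in> Hset G N"
  proof -
    have "inv (inv g) \<otimes> (inv n \<otimes> inv g) = g \<otimes> inv n \<otimes> inv g" using x by (simp add: m_assoc)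
    moreover have "g \<otimes> inv n \<otimes> inv g \<in> N" using x by (simp add: inv_op_closed2)
    ultimately show ?thesis using x by (simp add: Hset_iff)
  qed
  finally show "inv\<^bsub>G \<times>\<times> G\<^esub> x \<in> Hset G N" .
qed

lemma Hgrp_group: "group (Hgrp G N)"
  unfolding Hgrp_def by (rule subgroup.subgroup_is_group[OF Hset_sub GG_group])

lemma Hgrp_monoid: "monoid (Hgrp G N)"
  using Hgrp_group group.is_monoid by blast

lemma Hgrp_carrier[simp]: "carrier (Hgrp G N) = Hset G N" by (simp add: Hgrp_def)
lemma Hgrp_mult[simp]: "(a, b) \<otimes>\<^bsub>Hgrp G N\<^esub> (c, d) = (a \<otimes> c, b \<otimes> d)"
  by (simp add: Hgrp_def)
lemma Hgrp_one[simp]: "\<one>\<^bsub>Hgrp G N\<^esub> = (\<one>, \<one>)" by (simp add: Hgrp_def)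
lemma Hgrp_inv[simp]: "(a, b) \<in> Hset G N \<Longrightarrow> inv\<^bsub>Hgrp G N\<^esub> (a, b) = (inv a, inv b)"
  unfolding Hgrp_def
  using group.m_inv_consistent[OF GG_group Hset_sub]
  by (simp add: inv_DirProd[OF is_group is_group] Hset_iff)

lemma Delta_carrier[simp]: "carrier (Delta G) = {(g, g) | g. g \<in> carrier G}" by (simp add: Delta_def)
lemma Delta_mult[simp]: "(a, b) \<otimes>\<^bsub>Delta G\<^esub> (c, d) = (a \<otimes> c, b \<otimes> d)"
  by (simp add: Delta_def)

lemma psi_of_hel:
  "g \<in> carrier G \<Longrightarrow> n \<in> carrier G \<Longrightarrow> k \<in> carrier G \<Longrightarrow> n' \<in> carrier G \<Longrightarrow>
   psi_of G p (g \<otimes> n, g) (k \<otimes> n', k) = snd p (conjg G n k) n' / fst p k n"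
  by (simp add: psi_of_def Let_def)

lemma psi_of_gen:
  "psi_of G p (a, b) (c, d) = snd p (conjg G (inv b \<otimes> a) d) (inv d \<otimes> c) / fst p d (inv b \<otimes> a)"
  by (simp add: psi_of_def Let_def)

end


definition pmul :: "'a lampair \<Rightarrow> 'a lampair \<Rightarrow> 'a lampair" where
  "pmul p q = (\<lambda>g n. fst p g n * fst q g n, \<lambda>n n'. snd p n n' * snd q n n')"

lemma psi_of_pmul: "psi_of G (pmul p q) = (\<lambda>x y. psi_of G p x y * psi_of G q x y)"
  by (intro ext) (simp add: psi_of_def Let_def pmul_def times_divide_times_eq)

context jones
begin

lemma N_sub: "subgroup N G" by (simp add: subgroup_axioms)
lemma N_mult[simp]: "m \<in> N \<Longrightarrow> n \<in> N \<Longrightarrow> m \<otimes> n \<in> N" by (rule subgroup.m_closed[OF N_sub])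
lemma N_one[simp]: "\<one> \<in> N" by (rule subgroup.one_closed[OF N_sub])
lemma N_inv[simp]: "n \<in> N \<Longrightarrow> inv n \<in> N" by (rule subgroup.m_inv_closed[OF N_sub])

lemma lam_refl: "lam_equiv G N p p"
  unfolding lam_equiv_def by (rule exI[of _ "\<lambda>_. 1"]) simp

lemma lam_sym: assumes "lam_equiv G N p q" shows "lam_equiv G N q p"
proof -
  obtain \<eta> where e: "\<forall>n\<in>N. \<eta> n \<in> circle" "\<eta> \<one> = 1"
     "\<forall>g\<in>carrier G. \<forall>n\<in>N. fst q g n = fst p g n * (\<eta> n * cnj (\<eta> (conjg G n g)))"
     "\<forall>n\<in>N. \<forall>n'\<in>N. snd q n n' = snd p n n' * (\<eta> (n \<otimes> n') * cnj (\<eta> n * \<eta> n'))"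
    using assms unfolding lam_equiv_def by blast
  show ?thesis unfolding lam_equiv_def
  proof (intro exI[of _ "\<lambda>n. cnj (\<eta> n)"] conjI ballI)
    fix n assume "n \<in> N" thus "cnj (\<eta> n) \<in> circle" using e by (simp add: circle_cnj)
  next
    show "cnj (\<eta> \<one>) = 1" using e by simp
  next
    fix g n assume gn: "g \<in> carrier G" "n \<in> N"
    hence c: "\<eta> n \<in> circle" "\<eta> (conjg G n g) \<in> circle" using e by auto
    show "fst p g n = fst q g n * (cnj (\<eta> n) * cnj (cnj (\<eta> (conjg G n g))))"
      using e(3) gn c circle_nz[OF c(1)] circle_nz[OF c(2)] by (simp add: cnj_circle field_simps)
  next
    fix n n' assume nn: "n \<in> N" "n' \<in> N"
    hence c: "\<eta> n \<in> circle" "\<eta> n' \<in> circle" "\<eta> (n \<otimes> n') \<in> circle" using e by auto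
    show "snd p n n' = snd q n n' * (cnj (\<eta> (n \<otimes> n')) * cnj (cnj (\<eta> n) * cnj (\<eta> n')))"
      using e(4) nn c circle_nz[OF c(1)] circle_nz[OF c(2)] circle_nz[OF c(3)]
      by (simp add: cnj_circle field_simps)
  qed
qed

lemma lam_trans: assumes "lam_equiv G N p q" "lam_equiv G N q r" shows "lam_equiv G N p r"
proof -
  obtain \<eta> where e: "\<forall>n\<in>N. \<eta> n \<in> circle" "\<eta> \<one> = 1"
     "\<forall>g\<in>carrier G. \<forall>n\<in>N. fst q g n = fst p g n * (\<eta> n * cnj (\<eta> (conjg G n g)))"
     "\<forall>n\<in>N. \<forall>n'\<in>N. snd q n n' = snd p n n' * (\<eta> (n \<otimes> n') * cnj (\<eta> n * \<eta> n'))"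
    using assms(1) unfolding lam_equiv_def by blast
  obtain \<zeta> where z: "\<forall>n\<in>N. \<zeta> n \<in> circle" "\<zeta> \<one> = 1"
     "\<forall>g\<in>carrier G. \<forall>n\<in>N. fst r g n = fst q g n * (\<zeta> n * cnj (\<zeta> (conjg G n g)))"
     "\<forall>n\<in>N. \<forall>n'\<in>N. snd r n n' = snd q n n' * (\<zeta> (n \<otimes> n') * cnj (\<zeta> n * \<zeta> n'))"
    using assms(2) unfolding lam_equiv_def by blast
  show ?thesis unfolding lam_equiv_def
  proof (intro exI[of _ "\<lambda>n. \<eta> n * \<zeta> n"] conjI ballI)
    fix n assume "n \<in> N" thus "\<eta> n * \<zeta> n \<in> circle" using e z by (simp add: circle_mult)
  next
    show "\<eta> \<one> * \<zeta> \<one> = 1" using e z by simp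
  next
    fix g n assume gn: "g \<in> carrier G" "n \<in> N"
    show "fst r g n = fst p g n * (\<eta> n * \<zeta> n * cnj (\<eta> (conjg G n g) * \<zeta> (conjg G n g)))"
      using e(3) z(3) gn by (simp add: mult_ac)
  next
    fix n n' assume nn: "n \<in> N" "n' \<in> N"
    show "snd r n n' = snd p n n' * (\<eta> (n \<otimes> n') * \<zeta> (n \<otimes> n') * cnj (\<eta> n * \<zeta> n * (\<eta> n' * \<zeta> n')))"
      using e(4) z(4) nn by (simp add: mult_ac)
  qed
qed

lemma lam_mult: assumes "lam_equiv G N p p'" "lam_equiv G N q q'"
  shows "lam_equiv G N (pmul p q) (pmul p' q')"
proof -
  obtain \<eta> where e: "\<forall>n\<in>N. \<eta> n \<in> circle" "\<eta> \<one> = 1"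
     "\<forall>g\<in>carrier G. \<forall>n\<in>N. fst p' g n = fst p g n * (\<eta> n * cnj (\<eta> (conjg G n g)))"
     "\<forall>n\<in>N. \<forall>n'\<in>N. snd p' n n' = snd p n n' * (\<eta> (n \<otimes> n') * cnj (\<eta> n * \<eta> n'))"
    using assms(1) unfolding lam_equiv_def by blast
  obtain \<zeta> where z: "\<forall>n\<in>N. \<zeta> n \<in> circle" "\<zeta> \<one> = 1"
     "\<forall>g\<in>carrier G. \<forall>n\<in>N. fst q' g n = fst q g n * (\<zeta> n * cnj (\<zeta> (conjg G n g)))"
     "\<forall>n\<in>N. \<forall>n'\<in>N. snd q' n n' = snd q n n' * (\<zeta> (n \<otimes> n') * cnj (\<zeta> n * \<zeta> n'))"
    using assms(2) unfolding lam_equiv_def by blast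
  show ?thesis unfolding lam_equiv_def pmul_def fst_conv snd_conv
  proof (intro exI[of _ "\<lambda>n. \<eta> n * \<zeta> n"] conjI ballI)
    fix n assume "n \<in> N" thus "\<eta> n * \<zeta> n \<in> circle" using e z by (simp add: circle_mult)
  next
    show "\<eta> \<one> * \<zeta> \<one> = 1" using e z by simp
  next
    fix g n assume gn: "g \<in> carrier G" "n \<in> N"
    show "fst p' g n * fst q' g n = fst p g n * fst q g n * (\<eta> n * \<zeta> n * cnj (\<eta> (conjg G n g) * \<zeta> (conjg G n g)))"
      using e(3) z(3) gn by (simp add: mult_ac)
  next
    fix n n' assume nn: "n \<in> N" "n' \<in> N"
    show "snd p' n n' * snd q' n n' = snd p n n' * snd q n n' * (\<eta> (n \<otimes> n') * \<zeta> (n \<otimes> n') * cnj (\<eta> n * \<zeta> n * (\<eta> n' * \<zeta> n')))"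
      using e(4) z(4) nn by (simp add: mult_ac)
  qed
qed

lemma Zpairs_iff: "(la, mu) \<in> Zpairs G N \<longleftrightarrow>
     (\<forall>g\<in>carrier G. \<forall>n\<in>N. la g n \<in> circle) \<and>
     (\<forall>x\<in>N. \<forall>y\<in>N. mu x y \<in> circle) \<and>
     (\<forall>x\<in>N. \<forall>y\<in>N. \<forall>z\<in>N. mu x y * mu (x \<otimes> y) z = mu y z * mu x (y \<otimes> z)) \<and>
     (\<forall>m\<in>N. \<forall>n\<in>N. la m n = mu m (conjg G n m) * cnj (mu n m)) \<and>
     (\<forall>g\<in>carrier G. \<forall>h\<in>carrier G. \<forall>n\<in>N. la (g \<otimes> h) n = la g n * la h (conjg G n g)) \<and>
     (\<forall>g\<in>carrier G. \<forall>m\<in>N. \<forall>n\<in>N.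
        la g (m \<otimes> n) * cnj (la g m * la g n) = mu m n * cnj (mu (conjg G m g) (conjg G n g))) \<and>
     (\<forall>n\<in>N. la \<one> n = 1) \<and> (\<forall>g\<in>carrier G. la g \<one> = 1) \<and>
     (\<forall>n\<in>N. mu \<one> n = 1) \<and> (\<forall>n\<in>N. mu n \<one> = 1)"
  by (simp add: Zpairs_def cocycles_def)

lemma Zpairs_mult: assumes "p \<in> Zpairs G N" "q \<in> Zpairs G N" shows "pmul p q \<in> Zpairs G N"
proof -
  obtain la mu la' mu' where pq: "p = (la, mu)" "q = (la', mu')" by (cases p, cases q) auto
  have A: "(la, mu) \<in> Zpairs G N" "(la', mu') \<in> Zpairs G N" using assms pq by auto
  note a = A(1)[unfolded Zpairs_iff] and b = A(2)[unfolded Zpairs_iff]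
  show ?thesis unfolding pq pmul_def fst_conv snd_conv Zpairs_iff
  proof (intro conjI ballI)
    fix g n assume "g \<in> carrier G" "n \<in> N" thus "la g n * la' g n \<in> circle" using a b by (simp add: circle_mult)
  next
    fix x y assume "x \<in> N" "y \<in> N" thus "mu x y * mu' x y \<in> circle" using a b by (simp add: circle_mult)
  next
    fix x y z assume xyz: "x \<in> N" "y \<in> N" "z \<in> N"
    have 1: "mu x y * mu (x \<otimes> y) z = mu y z * mu x (y \<otimes> z)" using a xyz by blast
    have 2: "mu' x y * mu' (x \<otimes> y) z = mu' y z * mu' x (y \<otimes> z)" using b xyz by blast
    have "mu x y * mu' x y * (mu (x \<otimes> y) z * mu' (x \<otimes> y) z) = (mu x y * mu (x \<otimes> y) z) * (mu' x y * mu' (x \<otimes> y) z)"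
      by (simp only: mult_ac)
    also have "\<dots> = (mu y z * mu x (y \<otimes> z)) * (mu' y z * mu' x (y \<otimes> z))" by (simp only: 1 2)
    finally show "mu x y * mu' x y * (mu (x \<otimes> y) z * mu' (x \<otimes> y) z) = mu y z * mu' y z * (mu x (y \<otimes> z) * mu' x (y \<otimes> z))"
      by (simp only: mult_ac)
  next
    fix m n assume mn: "m \<in> N" "n \<in> N"
    show "la m n * la' m n = mu m (conjg G n m) * mu' m (conjg G n m) * cnj (mu n m * mu' n m)"
      using a b mn by (simp add: mult_ac)
  next
    fix g h n assume "g \<in> carrier G" "h \<in> carrier G" "n \<in> N"
    thus "la (g \<otimes> h) n * la' (g \<otimes> h) n = la g n * la' g n * (la h (conjg G n g) * la' h (conjg G n g))"
      using a b by (simp add: mult_ac)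
  next
    fix g m n assume gmn: "g \<in> carrier G" "m \<in> N" "n \<in> N"
    have 1: "la g (m \<otimes> n) * cnj (la g m * la g n) = mu m n * cnj (mu (conjg G m g) (conjg G n g))"
      using a gmn by blast
    have 2: "la' g (m \<otimes> n) * cnj (la' g m * la' g n) = mu' m n * cnj (mu' (conjg G m g) (conjg G n g))"
      using b gmn by blast
    show "la g (m \<otimes> n) * la' g (m \<otimes> n) * cnj (la g m * la' g m * (la g n * la' g n)) =
          mu m n * mu' m n * cnj (mu (conjg G m g) (conjg G n g) * mu' (conjg G m g) (conjg G n g))"
    proof -
      have "la g (m \<otimes> n) * la' g (m \<otimes> n) * cnj (la g m * la' g m * (la g n * la' g n))
         = (la g (m \<otimes> n) * cnj (la g m * la g n)) * (la' g (m \<otimes> n) * cnj (la' g m * la' g n))"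
        by (simp only: complex_cnj_mult mult_ac)
      also have "\<dots> = (mu m n * cnj (mu (conjg G m g) (conjg G n g))) * (mu' m n * cnj (mu' (conjg G m g) (conjg G n g)))"
        by (simp only: 1 2)
      finally show ?thesis by (simp only: complex_cnj_mult mult_ac)
    qed
  qed (use a b in auto)
qed

lemma lam_class_eq: "lam_equiv G N p q \<Longrightarrow> lam_class G N p = lam_class G N q"
  unfolding lam_class_def using lam_sym lam_trans by blast

lemma in_lam_class: "p \<in> Zpairs G N \<Longrightarrow> p \<in> lam_class G N p"
  by (simp add: lam_class_def lam_refl)

lemma some_lam: "p \<in> Zpairs G N \<Longrightarrow> lam_equiv G N p (SOME q. q \<in> lam_class G N p) \<and> (SOME q. q \<in> lam_class G N p) \<in> Zpairs G N"
  using someI[of "\<lambda>q. q \<in> lam_class G N p", OF in_lam_class] by (simp add: lam_class_def)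

lemma Lambda_mult: assumes "p \<in> Zpairs G N" "q \<in> Zpairs G N"
  shows "lam_class G N p \<otimes>\<^bsub>Lambda G N\<^esub> lam_class G N q = lam_class G N (pmul p q)"
proof -
  have "lam_equiv G N (pmul p q) (pmul (SOME p'. p' \<in> lam_class G N p) (SOME q'. q' \<in> lam_class G N q))"
    using lam_mult some_lam assms by blast
  thus ?thesis by (simp add: Lambda_def Let_def pmul_def[symmetric] lam_class_eq)
qed

end


lemma alg2:
  fixes A B C D E F G :: complex
  assumes "A * B = C * D" "E * B = F" "F = G * D" "D \<noteq> 0" shows "C * E = A * G"
proof -
  have "C * E * D = (C * D) * E" by (simp add: mult_ac)
  also have "\<dots> = (A * B) * E" using assms(1) by simp
  also have "\<dots> = A * (E * B)" by (simp add: mult_ac)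
  also have "\<dots> = A * G * D" using assms(2,3) by (simp add: mult_ac)
  finally show ?thesis using assms(4) by simp
qed

lemma alg3:
  fixes u1 u2 u3 u4 u5 u6 u7 u8 :: complex
  assumes "u1 \<noteq> 0" "u2 \<noteq> 0" "u3 \<noteq> 0" "u4 \<noteq> 0" "u5 \<noteq> 0" "u5 * u6 = u7 * u8"
  shows "u4 / u1 * (u6 / (u2 * u3 * u4 / u5)) = u7 / u3 * (u8 / (u1 * u2))"
proof -
  have "u4 / u1 * (u6 / (u2 * u3 * u4 / u5)) = (u5 * u6) / (u1 * u2 * u3)"
    using assms by (simp add: field_simps)
  also have "\<dots> = (u7 * u8) / (u1 * u2 * u3)" using assms by simp
  also have "\<dots> = u7 / u3 * (u8 / (u1 * u2))" using assms by (simp add: field_simps)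
  finally show ?thesis .
qed

locale zp = jones +
  fixes la mu assumes Z: "(la, mu) \<in> Zpairs G N"
begin

lemma Zs: "(\<forall>g\<in>carrier G. \<forall>n\<in>N. la g n \<in> circle) \<and>
     (\<forall>x\<in>N. \<forall>y\<in>N. mu x y \<in> circle) \<and>
     (\<forall>x\<in>N. \<forall>y\<in>N. \<forall>z\<in>N. mu x y * mu (x \<otimes> y) z = mu y z * mu x (y \<otimes> z)) \<and>
     (\<forall>m\<in>N. \<forall>n\<in>N. la m n = mu m (conjg G n m) * cnj (mu n m)) \<and>
     (\<forall>g\<in>carrier G. \<forall>h\<in>carrier G. \<forall>n\<in>N. la (g \<otimes> h) n = la g n * la h (conjg G n g)) \<and>
     (\<forall>g\<in>carrier G. \<forall>m\<in>N. \<forall>n\<in>N.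
        la g (m \<otimes> n) * cnj (la g m * la g n) = mu m n * cnj (mu (conjg G m g) (conjg G n g))) \<and>
     (\<forall>n\<in>N. la \<one> n = 1) \<and> (\<forall>g\<in>carrier G. la g \<one> = 1) \<and>
     (\<forall>n\<in>N. mu \<one> n = 1) \<and> (\<forall>n\<in>N. mu n \<one> = 1)"
  using Z by (simp only: Zpairs_iff)

lemma la_circ: "g \<in> carrier G \<Longrightarrow> n \<in> N \<Longrightarrow> la g n \<in> circle" using Zs by blast
lemma mu_circ: "m \<in> N \<Longrightarrow> n \<in> N \<Longrightarrow> mu m n \<in> circle" using Zs by blast
lemma la_nz: "g \<in> carrier G \<Longrightarrow> n \<in> N \<Longrightarrow> la g n \<noteq> 0" using la_circ circle_nz by blast
lemma mu_nz: "m \<in> N \<Longrightarrow> n \<in> N \<Longrightarrow> mu m n \<noteq> 0" using mu_circ circle_nz by blast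
lemma mu_coc: "x \<in> N \<Longrightarrow> y \<in> N \<Longrightarrow> z \<in> N \<Longrightarrow> mu x y * mu (x \<otimes> y) z = mu y z * mu x (y \<otimes> z)"
  using Zs by blast
lemma Z1: "m \<in> N \<Longrightarrow> n \<in> N \<Longrightarrow> la m n = mu m (conjg G n m) / mu n m"
  using Zs mu_circ by (simp add: cnj_circle)
lemma Z2: "g \<in> carrier G \<Longrightarrow> h \<in> carrier G \<Longrightarrow> n \<in> N \<Longrightarrow> la (g \<otimes> h) n = la g n * la h (conjg G n g)"
  using Zs by blast
lemma Z3: assumes "g \<in> carrier G" "m \<in> N" "n \<in> N"
  shows "la g (m \<otimes> n) = la g m * la g n * mu m n / mu (conjg G m g) (conjg G n g)"
proof -
  have "la g (m \<otimes> n) * cnj (la g m * la g n) = mu m n * cnj (mu (conjg G m g) (conjg G n g))"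
    using Zs assms by blast
  hence "la g (m \<otimes> n) / (la g m * la g n) = mu m n / mu (conjg G m g) (conjg G n g)"
    using assms la_circ mu_circ by (simp add: cnj_circle)
  thus ?thesis using assms la_nz mu_nz by (simp add: field_simps)
qed
lemma la_one1[simp]: "n \<in> N \<Longrightarrow> la \<one> n = 1" using Zs by blast
lemma la_one2[simp]: "g \<in> carrier G \<Longrightarrow> la g \<one> = 1" using Zs by blast
lemma mu_one1[simp]: "n \<in> N \<Longrightarrow> mu \<one> n = 1" using Zs by blast
lemma mu_one2[simp]: "n \<in> N \<Longrightarrow> mu n \<one> = 1" using Zs by blast

abbreviation "ps \<equiv> psi_of G (la, mu)"

lemma ps_hel: "g \<in> carrier G \<Longrightarrow> n \<in> N \<Longrightarrow> k \<in> carrier G \<Longrightarrow> n' \<in> N \<Longrightarrow>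
   ps (g \<otimes> n, g) (k \<otimes> n', k) = mu (conjg G n k) n' / la k n"
  by (simp add: psi_of_hel)

lemma psi_coc: "ps \<in> cocycles (Hgrp G N)"
  unfolding cocycles_def
proof (intro CollectI conjI ballI)
  fix x y assume hx: "x \<in> carrier (Hgrp G N)" and hy: "y \<in> carrier (Hgrp G N)"
  obtain g n where "x = (g \<otimes> n, g)" "g \<in> carrier G" "n \<in> N" using hx by (auto elim: HsetE)
  moreover obtain k n' where "y = (k \<otimes> n', k)" "k \<in> carrier G" "n' \<in> N" using hy by (auto elim: HsetE)
  ultimately have xy: "x = (g \<otimes> n, g)" "y = (k \<otimes> n', k)" "g \<in> carrier G" "n \<in> N"
    "k \<in> carrier G" "n' \<in> N" by auto
  show "ps x y \<in> circle" using xy by (simp add: ps_hel circle_div mu_circ la_circ)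
next
  fix x y z assume hx: "x \<in> carrier (Hgrp G N)" and hy: "y \<in> carrier (Hgrp G N)"
    and hz: "z \<in> carrier (Hgrp G N)"
  obtain g n where "x = (g \<otimes> n, g)" "g \<in> carrier G" "n \<in> N" using hx by (auto elim: HsetE)
  moreover obtain k n' where "y = (k \<otimes> n', k)" "k \<in> carrier G" "n' \<in> N" using hy by (auto elim: HsetE)
  moreover obtain l n'' where "z = (l \<otimes> n'', l)" "l \<in> carrier G" "n'' \<in> N" using hz by (auto elim: HsetE)
  ultimately have xyz: "x = (g \<otimes> n, g)" "y = (k \<otimes> n', k)" "z = (l \<otimes> n'', l)"
    "g \<in> carrier G" "n \<in> N" "k \<in> carrier G" "n' \<in> N" "l \<in> carrier G" "n'' \<in> N" by auto
  define a where "a = conjg G n k"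
  define a' where "a' = conjg G n (k \<otimes> l)"
  define b where "b = conjg G n' l"
  have abN: "a \<in> N" "a' \<in> N" "b \<in> N" using xyz by (simp_all add: a_def a'_def b_def)
  have xy: "x \<otimes>\<^bsub>Hgrp G N\<^esub> y = ((g \<otimes> k) \<otimes> (a \<otimes> n'), g \<otimes> k)"
    using xyz Hmult_eq[of g n k n'] by (simp add: a_def)
  have yz: "y \<otimes>\<^bsub>Hgrp G N\<^esub> z = ((k \<otimes> l) \<otimes> (b \<otimes> n''), k \<otimes> l)"
    using xyz Hmult_eq[of k n' l n''] by (simp add: b_def)
  have c1: "conjg G (a \<otimes> n') l = a' \<otimes> b"
    using xyz by (simp add: a_def a'_def b_def conjg_mult conjg_conjg)
  have c2: "conjg G a l = a'" using xyz by (simp add: a_def a'_def conjg_conjg)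
  have e1: "ps x y = mu a n' / la k n" using xyz by (simp add: ps_hel a_def)
  have e2: "ps (x \<otimes>\<^bsub>Hgrp G N\<^esub> y) z = mu (a' \<otimes> b) n'' / la l (a \<otimes> n')"
    unfolding xy using xyz abN by (simp add: ps_hel c1)
  have e3: "ps y z = mu b n'' / la l n'" using xyz by (simp add: ps_hel b_def)
  have e4: "ps x (y \<otimes>\<^bsub>Hgrp G N\<^esub> z) = mu a' (b \<otimes> n'') / la (k \<otimes> l) n"
    unfolding yz using xyz abN by (simp add: ps_hel a'_def)
  have l1: "la (k \<otimes> l) n = la k n * la l a" using xyz by (simp add: Z2 a_def)
  have l2: "la l (a \<otimes> n') = la l a * la l n' * mu a n' / mu a' b"
    using xyz abN by (simp add: Z3 c2 b_def)
  have m: "mu a' b * mu (a' \<otimes> b) n'' = mu b n'' * mu a' (b \<otimes> n'')" using abN xyz by (simp add: mu_coc)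
  have nz: "la k n \<noteq> 0" "la l a \<noteq> 0" "la l n' \<noteq> 0" "mu a n' \<noteq> 0" "mu a' b \<noteq> 0"
    using xyz abN by (simp_all add: la_nz mu_nz)
  show "ps x y * ps (x \<otimes>\<^bsub>Hgrp G N\<^esub> y) z = ps y z * ps x (y \<otimes>\<^bsub>Hgrp G N\<^esub> z)"
    unfolding e1 e2 e3 e4 l1 l2 by (rule alg3[OF nz m])
qed

lemma ps_diag: "g \<in> carrier G \<Longrightarrow> k \<in> carrier G \<Longrightarrow> ps (g, g) (k, k) = 1"
  by (simp add: psi_of_gen)

lemma ps_Delta: "cohomologous (Delta G) (\<lambda>x y. 1) ps"
  unfolding cohomologous_def
  by (rule exI[of _ "\<lambda>_. 1"]) (auto simp: ps_diag)

lemma ps_beta: assumes "b \<in> N" "c \<in> N" shows "beta (Hgrp G N) ps (b, \<one>) (\<one>, c) = 1"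
proof -
  have bc: "b \<in> carrier G" "c \<in> carrier G" using assms by auto
  have p1: "inv\<^bsub>Hgrp G N\<^esub> (b, \<one>) \<otimes>\<^bsub>Hgrp G N\<^esub> (\<one>, c) \<otimes>\<^bsub>Hgrp G N\<^esub> (b, \<one>) = (\<one>, c)"
    using assms by simp
  have v1: "ps (b, \<one>) (\<one>, c) = mu (conjg G b c) (inv c) / la c b"
    using bc by (simp add: psi_of_gen)
  have v2: "ps (\<one>, c) (b, \<one>) = mu (inv c) b"
    using bc assms by (simp add: psi_of_gen)
  define d where "d = conjg G b c"
  have dN: "d \<in> N" using assms by (simp add: d_def)
  have g1: "c \<otimes> d = b \<otimes> c" using bc by (simp add: d_def conjg_def m_assoc[symmetric])
  have g2: "d \<otimes> inv c = inv c \<otimes> b" using bc by (simp add: d_def conjg_def m_assoc)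
  have i: "mu c d * mu (b \<otimes> c) (inv c) = mu d (inv c) * mu c (inv c \<otimes> b)"
    using mu_coc[of c d "inv c"] assms dN g1 g2 by simp
  have ii: "mu b c * mu (b \<otimes> c) (inv c) = mu c (inv c)"
    using mu_coc[of b c "inv c"] assms by (simp add: m_assoc)
  have iii: "mu c (inv c) = mu (inv c) b * mu c (inv c \<otimes> b)"
    using mu_coc[of c "inv c" b] assms by simp
  have la: "la c b = mu c d / mu b c" using Z1 assms by (simp add: d_def)
  have nz: "mu c d \<noteq> 0" "mu b c \<noteq> 0" "mu (inv c) b \<noteq> 0" "mu c (inv c \<otimes> b) \<noteq> 0" "mu (b \<otimes> c) (inv c) \<noteq> 0"
    "mu c (inv c) \<noteq> 0"
    using assms dN by (simp_all add: mu_nz)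
  have "mu d (inv c) * mu b c = mu c d * mu (inv c) b"
    by (rule alg2[OF i ii iii nz(4)])
  thus ?thesis
    unfolding beta_def p1 v1 v2 d_def[symmetric] la using nz mu_circ assms
    by (simp add: cnj_circle field_simps)
qed

lemma ps_GGN: "coh_class (Hgrp G N) ps \<in> GGN_carrier G N"
  unfolding GGN_carrier_def H2_def using psi_coc ps_Delta ps_beta by auto

end

context jones begin

lemma equiv_coh:
  assumes "lam_equiv G N p q" shows "cohomologous (Hgrp G N) (psi_of G p) (psi_of G q)"
proof -
  obtain \<eta> where e: "\<forall>n\<in>N. \<eta> n \<in> circle" "\<eta> \<one> = 1"
     "\<forall>g\<in>carrier G. \<forall>n\<in>N. fst q g n = fst p g n * (\<eta> n * cnj (\<eta> (conjg G n g)))"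
     "\<forall>n\<in>N. \<forall>n'\<in>N. snd q n n' = snd p n n' * (\<eta> (n \<otimes> n') * cnj (\<eta> n * \<eta> n'))"
    using assms unfolding lam_equiv_def by blast
  show ?thesis unfolding cohomologous_def
  proof (intro exI[of _ "\<lambda>x. cnj (\<eta> (inv (snd x) \<otimes> fst x))"] conjI ballI)
    fix x assume "x \<in> carrier (Hgrp G N)"
    thus "cnj (\<eta> (inv (snd x) \<otimes> fst x)) \<in> circle" using e(1)
      by (metis Hgrp_carrier Hset_iff circle_cnj prod.collapse)
  next
    fix x y assume hx: "x \<in> carrier (Hgrp G N)" and hy: "y \<in> carrier (Hgrp G N)"
    obtain g n where "x = (g \<otimes> n, g)" "g \<in> carrier G" "n \<in> N" using hx by (auto elim: HsetE)
    moreover obtain k n' where "y = (k \<otimes> n', k)" "k \<in> carrier G" "n' \<in> N" using hy by (auto elim: HsetE)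
    ultimately have xy: "x = (g \<otimes> n, g)" "y = (k \<otimes> n', k)" "g \<in> carrier G" "n \<in> N"
      "k \<in> carrier G" "n' \<in> N" by auto
    define a where "a = conjg G n k"
    have aN: "a \<in> N" using xy by (simp add: a_def)
    have pr: "x \<otimes>\<^bsub>Hgrp G N\<^esub> y = ((g \<otimes> k) \<otimes> (a \<otimes> n'), g \<otimes> k)"
      using xy Hmult_eq[of g n k n'] by (simp add: a_def)
    have c: "\<eta> n \<in> circle" "\<eta> n' \<in> circle" "\<eta> a \<in> circle" "\<eta> (a \<otimes> n') \<in> circle"
      using e(1) xy aN by auto
    have nz: "\<eta> n \<noteq> 0" "\<eta> n' \<noteq> 0" "\<eta> a \<noteq> 0" "\<eta> (a \<otimes> n') \<noteq> 0" using c circle_nz by auto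
    have fq: "fst q k n = fst p k n * (\<eta> n * cnj (\<eta> a))" using e(3) xy by (simp add: a_def)
    have sq: "snd q a n' = snd p a n' * (\<eta> (a \<otimes> n') * cnj (\<eta> a * \<eta> n'))" using e(4) xy aN by simp
    show "psi_of G q x y = psi_of G p x y * cnj (\<eta> (inv (snd x) \<otimes> fst x)) * cnj (\<eta> (inv (snd y) \<otimes> fst y)) /
            cnj (\<eta> (inv (snd (x \<otimes>\<^bsub>Hgrp G N\<^esub> y)) \<otimes> fst (x \<otimes>\<^bsub>Hgrp G N\<^esub> y)))"
      unfolding pr using xy aN
      apply (simp add: psi_of_hel a_def[symmetric] fq sq)
      using nz c by (simp add: cnj_circle field_simps)
  qed
qed

end


context jones begin

lemma H_closed[simp]: "(a, b) \<in> Hset G N \<Longrightarrow> (c, d) \<in> Hset G N \<Longrightarrow> (a \<otimes> c, b \<otimes> d) \<in> Hset G N"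
  using monoid.m_closed[OF Hgrp_monoid, of "(a,b)" "(c,d)"] by simp

lemma Hset_carr: "(a, b) \<in> Hset G N \<Longrightarrow> a \<in> carrier G \<and> b \<in> carrier G"
  by (simp add: Hset_iff)

lemma nk_eq: "n \<in> carrier G \<Longrightarrow> k \<in> carrier G \<Longrightarrow> n \<otimes> k = k \<otimes> conjg G n k"
  unfolding conjg_def by (simp add: m_assoc)

end

locale wc = jones +
  fixes \<psi> assumes W: "well_chosen G N \<psi>"
begin

lemma coc: "\<psi> \<in> cocycles (Hgrp G N)" using W by (simp add: well_chosen_def)
lemma Wd: "g \<in> carrier G \<Longrightarrow> h \<in> Hset G N \<Longrightarrow> \<psi> (g, g) h = 1" using W by (simp add: well_chosen_def)
lemma Wb: "n \<in> N \<Longrightarrow> n' \<in> N \<Longrightarrow> beta (Hgrp G N) \<psi> (n, \<one>) (\<one>, n') = 1"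
  using W by (simp add: well_chosen_def)
lemma circ: "x \<in> Hset G N \<Longrightarrow> y \<in> Hset G N \<Longrightarrow> \<psi> x y \<in> circle"
  using coc by (simp add: cocycles_def)
lemma nz: "x \<in> Hset G N \<Longrightarrow> y \<in> Hset G N \<Longrightarrow> \<psi> x y \<noteq> 0"
  using circ circle_nz by blast
lemma cc: "x \<in> Hset G N \<Longrightarrow> y \<in> Hset G N \<Longrightarrow> z \<in> Hset G N \<Longrightarrow>
  \<psi> x y * \<psi> (x \<otimes>\<^bsub>Hgrp G N\<^esub> y) z = \<psi> y z * \<psi> x (y \<otimes>\<^bsub>Hgrp G N\<^esub> z)"
  using coc by (simp add: cocycles_def)

lemma norm_r: assumes "x \<in> Hset G N" shows "\<psi> x (\<one>, \<one>) = 1"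
proof -
  obtain a b where x: "x = (a, b)" by (cases x)
  have ab: "a \<in> carrier G" "b \<in> carrier G" using assms x by (simp_all add: Hset_iff)
  have 1: "(\<one>, \<one>) \<in> Hset G N" by simp
  have "\<psi> x (\<one>, \<one>) * \<psi> x (\<one>, \<one>) = \<psi> (\<one>, \<one>) (\<one>, \<one>) * \<psi> x (\<one>, \<one>)"
    using cc[OF assms 1 1] x ab by simp
  also have "\<psi> (\<one>, \<one>) (\<one>, \<one>) = 1" using Wd[OF one_closed 1] .
  finally show ?thesis using nz[OF assms 1] by simp
qed

lemma R1: assumes "g \<in> carrier G" "n \<in> N" "y \<in> Hset G N"
  shows "\<psi> (g \<otimes> n, g) y = \<psi> (n, \<one>) y"
proof -
  obtain c d where y: "y = (c, d)" by (cases y)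
  have "\<psi> (g, g) (n, \<one>) * \<psi> ((g, g) \<otimes>\<^bsub>Hgrp G N\<^esub> (n, \<one>)) y =
        \<psi> (n, \<one>) y * \<psi> (g, g) ((n, \<one>) \<otimes>\<^bsub>Hgrp G N\<^esub> y)"
    using cc[of "(g, g)" "(n, \<one>)" y] assms y by simp
  moreover have "\<psi> (g, g) (n, \<one>) = 1" using Wd assms by simp
  moreover have "\<psi> (g, g) ((n, \<one>) \<otimes>\<^bsub>Hgrp G N\<^esub> y) = 1" using Wd assms y by simp
  ultimately show ?thesis using assms by simp
qed

lemma decomp: assumes "g \<in> carrier G" "n \<in> N" "k \<in> carrier G" "n' \<in> N"
  shows "\<psi> (g \<otimes> n, g) (k \<otimes> n', k) = \<psi> (n, \<one>) (k, k) * \<psi> (conjg G n k, \<one>) (n', \<one>)"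
proof -
  have "\<psi> (n, \<one>) (k, k) * \<psi> ((n, \<one>) \<otimes>\<^bsub>Hgrp G N\<^esub> (k, k)) (n', \<one>) =
        \<psi> (k, k) (n', \<one>) * \<psi> (n, \<one>) ((k, k) \<otimes>\<^bsub>Hgrp G N\<^esub> (n', \<one>))"
    using cc[of "(n, \<one>)" "(k, k)" "(n', \<one>)"] assms by simp
  moreover have "\<psi> (k, k) (n', \<one>) = 1" using Wd assms by simp
  moreover have "(n, \<one>) \<otimes>\<^bsub>Hgrp G N\<^esub> (k, k) = (k \<otimes> conjg G n k, k)"
    using assms nk_eq[of n k] by simp
  moreover have "\<psi> (k \<otimes> conjg G n k, k) (n', \<one>) = \<psi> (conjg G n k, \<one>) (n', \<one>)"
    using R1 assms by simp
  ultimately have "\<psi> (n, \<one>) (k \<otimes> n', k) = \<psi> (n, \<one>) (k, k) * \<psi> (conjg G n k, \<one>) (n', \<one>)"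
    using assms by simp
  thus ?thesis using R1 assms by simp
qed

lemma L_eq: assumes "g \<in> carrier G" "n \<in> N"
  shows "beta (Hgrp G N) \<psi> (g, g) (n, \<one>) = cnj (\<psi> (n, \<one>) (g, g))"
proof -
  define Xv where "Xv = inv\<^bsub>Hgrp G N\<^esub> (g, g) \<otimes>\<^bsub>Hgrp G N\<^esub> (n, \<one>) \<otimes>\<^bsub>Hgrp G N\<^esub> (g, g)"
  have "Xv \<in> carrier (Hgrp G N)" unfolding Xv_def using assms
    by (intro monoid.m_closed[OF Hgrp_monoid] group.inv_closed[OF Hgrp_group]) simp_all
  hence "\<psi> (g, g) Xv = 1" using Wd assms by simp
  thus ?thesis by (simp add: beta_def Xv_def[symmetric])
qed

lemma M1: "n \<in> N \<Longrightarrow> \<psi> (\<one>, \<one>) (n, \<one>) = 1" using Wd[of \<one>] by simp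
lemma M2: "n \<in> N \<Longrightarrow> \<psi> (n, \<one>) (\<one>, \<one>) = 1" using norm_r by simp

lemma Mcoc: "x \<in> N \<Longrightarrow> y \<in> N \<Longrightarrow> z \<in> N \<Longrightarrow>
   \<psi> (x, \<one>) (y, \<one>) * \<psi> (x \<otimes> y, \<one>) (z, \<one>) = \<psi> (y, \<one>) (z, \<one>) * \<psi> (x, \<one>) (y \<otimes> z, \<one>)"
  using cc[of "(x, \<one>)" "(y, \<one>)" "(z, \<one>)"] by simp

lemma beta_sym: assumes "n \<in> N" "m \<in> N" shows "\<psi> (n, \<one>) (\<one>, m) = \<psi> (\<one>, m) (n, \<one>)"
proof -
  have "inv\<^bsub>Hgrp G N\<^esub> (n, \<one>) \<otimes>\<^bsub>Hgrp G N\<^esub> (\<one>, m) \<otimes>\<^bsub>Hgrp G N\<^esub> (n, \<one>) = (\<one>, m)"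
    using assms by simp
  hence "\<psi> (n, \<one>) (\<one>, m) * cnj (\<psi> (\<one>, m) (n, \<one>)) = 1"
    using Wb[OF assms] by (simp add: beta_def)
  moreover have "\<psi> (\<one>, m) (n, \<one>) \<in> circle" using circ assms by simp
  ultimately show ?thesis using circle_nz by (simp add: cnj_circle field_simps)
qed

lemma LZ1: assumes m: "m \<in> N" and n: "n \<in> N"
  shows "cnj (\<psi> (n, \<one>) (m, m)) = \<psi> (m, \<one>) (conjg G n m, \<one>) * cnj (\<psi> (n, \<one>) (m, \<one>))"
proof -
  have mc: "m \<in> carrier G" "n \<in> carrier G" using assms by auto
  define P where "P = \<psi> (n, \<one>) (m, m)"
  define Xv where "Xv = \<psi> (inv m, \<one>) (m, \<one>)"
  define Xw where "Xw = \<psi> (m, \<one>) (inv m, \<one>)"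
  define A where "A = \<psi> (inv m, \<one>) (n, \<one>)"
  define B where "B = \<psi> (inv m \<otimes> n, \<one>) (m, \<one>)"
  define C where "C = \<psi> (inv m, \<one>) (n \<otimes> m, \<one>)"
  define D where "D = \<psi> (m, \<one>) (conjg G n m, \<one>)"
  define Mnm where "Mnm = \<psi> (n, \<one>) (m, \<one>)"
  have a: "\<psi> (n, \<one>) (\<one>, m) * \<psi> (n, m) (m, \<one>) = \<psi> (\<one>, m) (m, \<one>) * P"
    using cc[of "(n, \<one>)" "(\<one>, m)" "(m, \<one>)"] assms by (simp add: P_def)
  have e1: "(n, m) = (m \<otimes> (inv m \<otimes> n), m)" using mc by simp
  have b: "\<psi> (n, m) (m, \<one>) = B" unfolding B_def by (subst e1, rule R1) (use assms in auto)
  have e2: "(\<one>, m) = (m \<otimes> inv m, m)" using mc by simp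
  have c: "\<psi> (\<one>, m) (m, \<one>) = Xv" unfolding Xv_def by (subst e2, rule R1) (use assms in auto)
  have d: "\<psi> (n, \<one>) (\<one>, m) = A" unfolding A_def using beta_sym[OF n m]
    by (subst (asm) e2, subst (asm) R1) (use assms in auto)
  have f1: "A * B = Mnm * C" unfolding A_def B_def Mnm_def C_def
    using Mcoc[of "inv m" n m] assms by simp
  have cg: "inv m \<otimes> (n \<otimes> m) = conjg G n m" using mc by (simp add: conjg_def m_assoc)
  have f2: "Xw = C * D" unfolding Xw_def C_def D_def
    using Mcoc[of m "inv m" "n \<otimes> m"] assms mc by (simp add: M1 cg m_assoc[symmetric])
  have f3: "Xw = Xv" unfolding Xw_def Xv_def
    using Mcoc[of m "inv m" m] assms mc by (simp add: M1 M2)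
  have nzs: "P \<noteq> 0" "C \<noteq> 0" "Mnm \<noteq> 0" unfolding P_def C_def Mnm_def using nz assms by simp_all
  have g1: "Xv * P = A * B" using a b c d by simp
  have g2: "Xv = C * D" using f2 f3 by simp
  have "C * (D * P) = C * Mnm" using g1 g2 f1 by (simp add: mult_ac)
  hence "D * P = Mnm" using nzs by simp
  hence "P * D = Mnm" by (simp add: mult_ac)
  moreover have "P \<in> circle" "Mnm \<in> circle" unfolding P_def Mnm_def using circ assms by simp_all
  ultimately show ?thesis unfolding P_def[symmetric] D_def[symmetric] Mnm_def[symmetric]
    using nzs by (simp add: cnj_circle field_simps)
qed

lemma LZ2: assumes "g \<in> carrier G" "h \<in> carrier G" "n \<in> N"
  shows "\<psi> (n, \<one>) (g \<otimes> h, g \<otimes> h) = \<psi> (n, \<one>) (g, g) * \<psi> (conjg G n g, \<one>) (h, h)"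
proof -
  have "\<psi> (n, \<one>) (g, g) * \<psi> ((n, \<one>) \<otimes>\<^bsub>Hgrp G N\<^esub> (g, g)) (h, h) =
        \<psi> (g, g) (h, h) * \<psi> (n, \<one>) ((g, g) \<otimes>\<^bsub>Hgrp G N\<^esub> (h, h))"
    using cc[of "(n, \<one>)" "(g, g)" "(h, h)"] assms by simp
  moreover have "\<psi> (g, g) (h, h) = 1" using Wd assms by simp
  moreover have "(n, \<one>) \<otimes>\<^bsub>Hgrp G N\<^esub> (g, g) = (g \<otimes> conjg G n g, g)"
    using assms nk_eq[of n g] by simp
  moreover have "\<psi> (g \<otimes> conjg G n g, g) (h, h) = \<psi> (conjg G n g, \<one>) (h, h)"
    using R1 assms by simp
  ultimately show ?thesis using assms by simp
qed

lemma LZ3: assumes "g \<in> carrier G" "m \<in> N" "n \<in> N"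
  shows "\<psi> (m, \<one>) (n, \<one>) * \<psi> (m \<otimes> n, \<one>) (g, g) =
         \<psi> (n, \<one>) (g, g) * \<psi> (m, \<one>) (g, g) * \<psi> (conjg G m g, \<one>) (conjg G n g, \<one>)"
proof -
  have 1: "\<psi> (m, \<one>) (n, \<one>) * \<psi> (m \<otimes> n, \<one>) (g, g) = \<psi> (n, \<one>) (g, g) * \<psi> (m, \<one>) (n \<otimes> g, g)"
    using cc[of "(m, \<one>)" "(n, \<one>)" "(g, g)"] assms by simp
  have 2: "\<psi> (m, \<one>) (g, g) * \<psi> (m \<otimes> g, g) (conjg G n g, \<one>) =
        \<psi> (g, g) (conjg G n g, \<one>) * \<psi> (m, \<one>) (g \<otimes> conjg G n g, g)"
    using cc[of "(m, \<one>)" "(g, g)" "(conjg G n g, \<one>)"] assms by simp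
  have 3: "\<psi> (g, g) (conjg G n g, \<one>) = 1" using Wd assms by simp
  have 4: "\<psi> (m \<otimes> g, g) (conjg G n g, \<one>) = \<psi> (conjg G m g, \<one>) (conjg G n g, \<one>)"
    using R1[of g "conjg G m g" "(conjg G n g, \<one>)"] assms nk_eq[of m g] by simp
  have 5: "g \<otimes> conjg G n g = n \<otimes> g" using assms nk_eq[of n g] by simp
  show ?thesis using 1 2 3 4 5 by (simp add: mult_ac)
qed

lemma lam_of_Z: "lam_of G N \<psi> \<in> Zpairs G N"
  unfolding lam_of_def Zpairs_iff
proof (intro conjI ballI)
  fix g n assume "g \<in> carrier G" "n \<in> N"
  thus "beta (Hgrp G N) \<psi> (g, g) (n, \<one>) \<in> circle" using L_eq circ by (simp add: circle_cnj)
next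
  fix x y assume "x \<in> N" "y \<in> N" thus "\<psi> (x, \<one>) (y, \<one>) \<in> circle" using circ by simp
next
  fix x y z assume "x \<in> N" "y \<in> N" "z \<in> N"
  thus "\<psi> (x, \<one>) (y, \<one>) * \<psi> (x \<otimes> y, \<one>) (z, \<one>) = \<psi> (y, \<one>) (z, \<one>) * \<psi> (x, \<one>) (y \<otimes> z, \<one>)"
    by (rule Mcoc)
next
  fix m n assume "m \<in> N" "n \<in> N"
  thus "beta (Hgrp G N) \<psi> (m, m) (n, \<one>) = \<psi> (m, \<one>) (conjg G n m, \<one>) * cnj (\<psi> (n, \<one>) (m, \<one>))"
    using L_eq LZ1 by simp
next
  fix g h n assume a: "g \<in> carrier G" "h \<in> carrier G" "n \<in> N"
  thus "beta (Hgrp G N) \<psi> (g \<otimes> h, g \<otimes> h) (n, \<one>) =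
        beta (Hgrp G N) \<psi> (g, g) (n, \<one>) * beta (Hgrp G N) \<psi> (h, h) (conjg G n g, \<one>)"
    using L_eq LZ2 by simp
next
  fix g m n assume a: "g \<in> carrier G" "m \<in> N" "n \<in> N"
  have c: "\<psi> (m \<otimes> n, \<one>) (g, g) \<in> circle" "\<psi> (conjg G m g, \<one>) (conjg G n g, \<one>) \<in> circle"
    using circ a by simp_all
  have "cnj (\<psi> (m \<otimes> n, \<one>) (g, g)) * (\<psi> (m, \<one>) (g, g) * \<psi> (n, \<one>) (g, g)) =
        \<psi> (m, \<one>) (n, \<one>) * cnj (\<psi> (conjg G m g, \<one>) (conjg G n g, \<one>))"
    using LZ3[OF a] c circle_nz by (simp add: cnj_circle field_simps)
  thus "beta (Hgrp G N) \<psi> (g, g) (m \<otimes> n, \<one>) *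
        cnj (beta (Hgrp G N) \<psi> (g, g) (m, \<one>) * beta (Hgrp G N) \<psi> (g, g) (n, \<one>)) =
        \<psi> (m, \<one>) (n, \<one>) * cnj (\<psi> (conjg G m g, \<one>) (conjg G n g, \<one>))"
    using L_eq a by simp
next
  fix n assume "n \<in> N" thus "beta (Hgrp G N) \<psi> (\<one>, \<one>) (n, \<one>) = 1" using L_eq M2 by simp
next
  fix g assume "g \<in> carrier G" thus "beta (Hgrp G N) \<psi> (g, g) (\<one>, \<one>) = 1"
    using L_eq Wd[of \<one> "(g,g)"] by simp
next
  fix n assume "n \<in> N" thus "\<psi> (\<one>, \<one>) (n, \<one>) = 1" by (rule M1)
next
  fix n assume "n \<in> N" thus "\<psi> (n, \<one>) (\<one>, \<one>) = 1" by (rule M2)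
qed

lemma psi_lam_of: assumes "x \<in> Hset G N" "y \<in> Hset G N"
  shows "psi_of G (lam_of G N \<psi>) x y = \<psi> x y"
proof -
  obtain g n where "x = (g \<otimes> n, g)" "g \<in> carrier G" "n \<in> N" using assms(1) by (auto elim: HsetE)
  moreover obtain k n' where "y = (k \<otimes> n', k)" "k \<in> carrier G" "n' \<in> N" using assms(2) by (auto elim: HsetE)
  ultimately have xy: "x = (g \<otimes> n, g)" "y = (k \<otimes> n', k)" "g \<in> carrier G" "n \<in> N"
    "k \<in> carrier G" "n' \<in> N" by auto
  have c: "\<psi> (n, \<one>) (k, k) \<in> circle" using circ xy by simp
  show ?thesis using xy
    by (simp add: psi_of_hel lam_of_def L_eq decomp cnj_circle[OF c] circle_nz[OF c])
qed

end


context zp begin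

lemma ps_km: "k \<in> carrier G \<Longrightarrow> m \<in> N \<Longrightarrow> ps (k, k) (m, \<one>) = 1"
  by (simp add: psi_of_gen)
lemma ps_nn: "n \<in> N \<Longrightarrow> n' \<in> N \<Longrightarrow> ps (n, \<one>) (n', \<one>) = mu n n'"
  by (simp add: psi_of_gen)
lemma ps_nk: "n \<in> N \<Longrightarrow> k \<in> carrier G \<Longrightarrow> ps (n, \<one>) (k, k) = 1 / la k n"
  by (simp add: psi_of_gen)

end

context jones begin

lemma zpI: "(la, mu) \<in> Zpairs G N \<Longrightarrow> zp N G la mu"
  by (intro zp.intro) (unfold_locales, simp add: zp_axioms_def)

lemma coh_equiv:
  assumes P: "(la, mu) \<in> Zpairs G N" and Q: "(la', mu') \<in> Zpairs G N"
    and C: "cohomologous (Hgrp G N) (psi_of G (la, mu)) (psi_of G (la', mu'))"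
  shows "lam_equiv G N (la, mu) (la', mu')"
proof -
  note p = zpI[OF P] and q = zpI[OF Q]
  obtain \<theta> where t: "\<forall>x\<in>Hset G N. \<theta> x \<in> circle"
    "\<forall>x\<in>Hset G N. \<forall>y\<in>Hset G N. psi_of G (la', mu') x y =
        psi_of G (la, mu) x y * \<theta> x * \<theta> y / \<theta> (x \<otimes>\<^bsub>Hgrp G N\<^esub> y)"
    using C unfolding cohomologous_def by auto
  have tnz: "x \<in> Hset G N \<Longrightarrow> \<theta> x \<noteq> 0" for x using t(1) circle_nz by blast
  have F0: "\<theta> (\<one>, \<one>) = 1"
  proof -
    have "1 = 1 * \<theta> (\<one>, \<one>) * \<theta> (\<one>, \<one>) / \<theta> (\<one>, \<one>)"
      using t(2)[rule_format, of "(\<one>, \<one>)" "(\<one>, \<one>)"] zp.ps_diag[OF p] zp.ps_diag[OF q] by simp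
    thus ?thesis using tnz[of "(\<one>, \<one>)"] by simp
  qed
  have F1: "\<theta> (k \<otimes> m, k) = \<theta> (k, k) * \<theta> (m, \<one>)" if "k \<in> carrier G" "m \<in> N" for k m
  proof -
    have "1 = 1 * \<theta> (k, k) * \<theta> (m, \<one>) / \<theta> (k \<otimes> m, k)"
      using t(2)[rule_format, of "(k, k)" "(m, \<one>)"] zp.ps_km[OF p] zp.ps_km[OF q] that by simp
    moreover have "\<theta> (k \<otimes> m, k) \<noteq> 0" using tnz that by simp
    ultimately show ?thesis by (simp add: field_simps)
  qed
  define \<eta> where "\<eta> n = \<theta> (n, \<one>)" for n
  have ec: "n \<in> N \<Longrightarrow> \<eta> n \<in> circle" for n using t(1) by (simp add: \<eta>_def)
  have enz: "n \<in> N \<Longrightarrow> \<eta> n \<noteq> 0" for n using ec circle_nz by blast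
  show ?thesis unfolding lam_equiv_def fst_conv snd_conv
  proof (intro exI[of _ "\<lambda>n. cnj (\<eta> n)"] conjI ballI)
    fix n assume "n \<in> N" thus "cnj (\<eta> n) \<in> circle" using ec circle_cnj by blast
  next
    show "cnj (\<eta> \<one>) = 1" using F0 by (simp add: \<eta>_def)
  next
    fix g n assume gn: "g \<in> carrier G" "n \<in> N"
    have ng: "(n, \<one>) \<otimes>\<^bsub>Hgrp G N\<^esub> (g, g) = (g \<otimes> conjg G n g, g)" using gn nk_eq[of n g] by simp
    have "1 / la' g n = 1 / la g n * \<eta> n * \<theta> (g, g) / (\<theta> (g, g) * \<eta> (conjg G n g))"
      using t(2)[rule_format, of "(n, \<one>)" "(g, g)"] zp.ps_nk[OF p] zp.ps_nk[OF q] gn ng F1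
      by (simp add: \<eta>_def)
    moreover have "\<theta> (g, g) \<noteq> 0" using tnz gn by simp
    moreover have "la g n \<noteq> 0" "la' g n \<noteq> 0" using zp.la_nz[OF p] zp.la_nz[OF q] gn by auto
    moreover have "\<eta> n \<noteq> 0" "\<eta> (conjg G n g) \<noteq> 0" using enz gn by auto
    ultimately have "la' g n = la g n * \<eta> (conjg G n g) / \<eta> n" by (simp add: field_simps)
    thus "la' g n = la g n * (cnj (\<eta> n) * cnj (cnj (\<eta> (conjg G n g))))"
      using ec gn by (simp add: cnj_circle)
  next
    fix n n' assume nn: "n \<in> N" "n' \<in> N"
    have "mu' n n' = mu n n' * \<eta> n * \<eta> n' / \<eta> (n \<otimes> n')"
      using t(2)[rule_format, of "(n, \<one>)" "(n', \<one>)"] zp.ps_nn[OF p] zp.ps_nn[OF q] nn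
      by (simp add: \<eta>_def)
    thus "mu' n n' = mu n n' * (cnj (\<eta> (n \<otimes> n')) * cnj (cnj (\<eta> n) * cnj (\<eta> n')))"
      using ec nn enz by (simp add: cnj_circle)
  qed
qed

lemma wc_exists:
  assumes A: "\<psi> \<in> cocycles (Hgrp G N)" and D: "cohomologous (Delta G) (\<lambda>x y. 1) \<psi>"
    and B: "\<forall>n\<in>N. \<forall>n'\<in>N. beta (Hgrp G N) \<psi> (n, \<one>) (\<one>, n') = 1"
  shows "\<exists>\<psi>2. well_chosen G N \<psi>2 \<and> cohomologous (Hgrp G N) \<psi> \<psi>2"
proof -
  obtain \<eta> where e: "\<forall>x\<in>carrier (Delta G). \<eta> x \<in> circle"
    "\<forall>x\<in>carrier (Delta G). \<forall>y\<in>carrier (Delta G). \<psi> x y = 1 * \<eta> x * \<eta> y / \<eta> (x \<otimes>\<^bsub>Delta G\<^esub> y)"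
    using D unfolding cohomologous_def by blast
  have ec: "g \<in> carrier G \<Longrightarrow> \<eta> (g, g) \<in> circle" for g using e(1) by auto
  have ed: "g \<in> carrier G \<Longrightarrow> k \<in> carrier G \<Longrightarrow> \<psi> (g, g) (k, k) = \<eta> (g, g) * \<eta> (k, k) / \<eta> (g \<otimes> k, g \<otimes> k)"
    for g k using e(2) by auto
  define \<theta>1 where "\<theta>1 x = cnj (\<eta> (snd x, snd x))" for x :: "'a \<times> 'a"
  define \<psi>1 where "\<psi>1 x y = \<psi> x y * \<theta>1 x * \<theta>1 y / \<theta>1 (x \<otimes>\<^bsub>Hgrp G N\<^esub> y)" for x y
  have coh1: "cohomologous (Hgrp G N) \<psi> \<psi>1" unfolding cohomologous_def
  proof (intro exI[of _ \<theta>1] conjI ballI)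
    fix x assume "x \<in> carrier (Hgrp G N)"
    thus "\<theta>1 x \<in> circle" unfolding \<theta>1_def
      by (metis Hgrp_carrier Hset_iff circle_cnj ec prod.collapse)
  qed (simp add: \<psi>1_def)
  have c1: "\<psi>1 \<in> cocycles (Hgrp G N)" by (rule coh_cocycle[OF Hgrp_monoid A coh1])
  have d1: "\<psi>1 (g, g) (k, k) = 1" if "g \<in> carrier G" "k \<in> carrier G" for g k
  proof -
    have "\<eta> (g, g) \<in> circle" "\<eta> (k, k) \<in> circle" "\<eta> (g \<otimes> k, g \<otimes> k) \<in> circle" using ec that by auto
    thus ?thesis using that circle_nz by (simp add: \<psi>1_def \<theta>1_def ed cnj_circle)
  qed
  have c1c: "x \<in> Hset G N \<Longrightarrow> y \<in> Hset G N \<Longrightarrow> \<psi>1 x y \<in> circle" for x y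
    using c1 by (simp add: cocycles_def)
  have c1cc: "x \<in> Hset G N \<Longrightarrow> y \<in> Hset G N \<Longrightarrow> z \<in> Hset G N \<Longrightarrow>
     \<psi>1 x y * \<psi>1 (x \<otimes>\<^bsub>Hgrp G N\<^esub> y) z = \<psi>1 y z * \<psi>1 x (y \<otimes>\<^bsub>Hgrp G N\<^esub> z)" for x y z
    using c1 by (simp add: cocycles_def)
  define \<theta>2 where "\<theta>2 x = \<psi>1 (snd x, snd x) (inv (snd x) \<otimes> fst x, \<one>)" for x :: "'a \<times> 'a"
  define \<psi>2 where "\<psi>2 x y = \<psi>1 x y * \<theta>2 x * \<theta>2 y / \<theta>2 (x \<otimes>\<^bsub>Hgrp G N\<^esub> y)" for x y
  have coh2: "cohomologous (Hgrp G N) \<psi>1 \<psi>2" unfolding cohomologous_def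
  proof (intro exI[of _ \<theta>2] conjI ballI)
    fix x assume "x \<in> carrier (Hgrp G N)"
    then obtain a b where x: "x = (a, b)" "a \<in> carrier G" "b \<in> carrier G" "inv b \<otimes> a \<in> N"
      by (metis Hgrp_carrier Hset_iff prod.collapse)
    thus "\<theta>2 x \<in> circle" unfolding \<theta>2_def using c1c by simp
  qed (simp add: \<psi>2_def)
  have c2: "\<psi>2 \<in> cocycles (Hgrp G N)" by (rule coh_cocycle[OF Hgrp_monoid c1 coh2])
  have coh: "cohomologous (Hgrp G N) \<psi> \<psi>2" by (rule coh_trans[OF coh1 coh2])
  have W2: "\<psi>2 (g, g) h = 1" if g: "g \<in> carrier G" and h: "h \<in> Hset G N" for g h
  proof -
    obtain k n where hk: "h = (k \<otimes> n, k)" "k \<in> carrier G" "n \<in> N" using h by (auto elim: HsetE)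
    have t1: "\<theta>2 (g, g) = 1" unfolding \<theta>2_def using d1[of g \<one>] g by simp
    have t2: "\<theta>2 h = \<psi>1 (k, k) (n, \<one>)" unfolding \<theta>2_def using hk by simp
    have pr: "(g, g) \<otimes>\<^bsub>Hgrp G N\<^esub> h = (g \<otimes> (k \<otimes> n), g \<otimes> k)" using hk by simp
    have iv: "inv (g \<otimes> k) \<otimes> (g \<otimes> (k \<otimes> n)) = n" using hk g by (simp add: inv_mult_group m_assoc)
    have t3: "\<theta>2 ((g, g) \<otimes>\<^bsub>Hgrp G N\<^esub> h) = \<psi>1 (g \<otimes> k, g \<otimes> k) (n, \<one>)"
      unfolding \<theta>2_def pr using iv by simp
    have cc: "\<psi>1 (g, g) (k, k) * \<psi>1 (g \<otimes> k, g \<otimes> k) (n, \<one>) = \<psi>1 (k, k) (n, \<one>) * \<psi>1 (g, g) h"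
      using c1cc[of "(g,g)" "(k,k)" "(n, \<one>)"] g hk by simp
    have nz: "\<psi>1 (g \<otimes> k, g \<otimes> k) (n, \<one>) \<noteq> 0" using c1c circle_nz g hk by simp
    show ?thesis unfolding \<psi>2_def t1 t2 t3 using cc d1[OF g hk(2)] nz by (simp add: field_simps)
  qed
  have B2: "beta (Hgrp G N) \<psi>2 (n, \<one>) (\<one>, n') = 1" if "n \<in> N" "n' \<in> N" for n n'
    using beta_coh[OF Hgrp_group coh, of "(n, \<one>)" "(\<one>, n')"] B that by simp
  show ?thesis using c2 W2 B2 coh by (auto simp: well_chosen_def)
qed

end


context jones begin

lemma wcI: "well_chosen G N \<psi> \<Longrightarrow> wc N G \<psi>"
  by (intro wc.intro) (unfold_locales, simp add: wc_axioms_def)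

lemma psiZ: "p \<in> Zpairs G N \<Longrightarrow> psi_of G p \<in> cocycles (Hgrp G N)"
  by (cases p) (simp add: zp.psi_coc[OF zpI])

lemma GGNm: "p \<in> Zpairs G N \<Longrightarrow> coh_class (Hgrp G N) (psi_of G p) \<in> carrier (GGN G N)"
  by (cases p) (simp add: zp.ps_GGN[OF zpI] GGN_def)

lemma coh_equiv': "p \<in> Zpairs G N \<Longrightarrow> q \<in> Zpairs G N \<Longrightarrow>
   cohomologous (Hgrp G N) (psi_of G p) (psi_of G q) \<Longrightarrow> lam_equiv G N p q"
  by (cases p; cases q) (simp add: coh_equiv)

end

lemma jonesI: "N \<lhd> G \<Longrightarrow> jones N G" by (simp add: jones_def)

theorem claim4:
  fixes G :: "('a, 'b) monoid_scheme" and N :: "'a set"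
  assumes "group G" and "finite (carrier G)" and "N \<lhd> G"
  shows "\<exists>\<phi>. \<phi> \<in> iso (Lambda G N) (GGN G N)
     \<and> (\<forall>p \<in> Zpairs G N. \<phi> (lam_class G N p) = coh_class (Hgrp G N) (psi_of G p))
     \<and> (\<forall>\<psi>. well_chosen G N \<psi> \<longrightarrow>
           inv_into (carrier (Lambda G N)) \<phi> (coh_class (Hgrp G N) \<psi>) = lam_class G N (lam_of G N \<psi>))"
proof -
  interpret jones N G using assms(3) by (rule jonesI)
  define \<phi> where "\<phi> A = coh_class (Hgrp G N) (psi_of G (SOME p. p \<in> A))" for A
  have phi_cls: "\<phi> (lam_class G N p) = coh_class (Hgrp G N) (psi_of G p)" if "p \<in> Zpairs G N" for p
  proof -
    have "lam_equiv G N p (SOME q. q \<in> lam_class G N p)" using some_lam[OF that] by blast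
    hence "cohomologous (Hgrp G N) (psi_of G p) (psi_of G (SOME q. q \<in> lam_class G N p))"
      by (rule equiv_coh)
    hence "coh_class (Hgrp G N) (psi_of G p) = coh_class (Hgrp G N) (psi_of G (SOME q. q \<in> lam_class G N p))"
      by (rule class_eq[OF Hgrp_monoid])
    thus ?thesis unfolding \<phi>_def by simp
  qed
  have carrL: "carrier (Lambda G N) = lam_class G N ` Zpairs G N" by (simp add: Lambda_def)
  have multGGN: "A \<otimes>\<^bsub>GGN G N\<^esub> B = A \<otimes>\<^bsub>H2 (Hgrp G N)\<^esub> B" for A B by (simp add: GGN_def)
  have hom: "\<phi> \<in> hom (Lambda G N) (GGN G N)"
  proof (rule homI)
    fix A assume "A \<in> carrier (Lambda G N)"
    then obtain p where "p \<in> Zpairs G N" "A = lam_class G N p" by (auto simp: carrL)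
    thus "\<phi> A \<in> carrier (GGN G N)" using phi_cls GGNm by simp
  next
    fix A B assume "A \<in> carrier (Lambda G N)" "B \<in> carrier (Lambda G N)"
    then obtain p q where pq: "p \<in> Zpairs G N" "A = lam_class G N p" "q \<in> Zpairs G N" "B = lam_class G N q"
      by (auto simp: carrL)
    have "\<phi> (A \<otimes>\<^bsub>Lambda G N\<^esub> B) = \<phi> (lam_class G N (pmul p q))" using pq Lambda_mult by simp
    also have "\<dots> = coh_class (Hgrp G N) (psi_of G (pmul p q))" using phi_cls Zpairs_mult pq by simp
    also have "\<dots> = coh_class (Hgrp G N) (psi_of G p) \<otimes>\<^bsub>H2 (Hgrp G N)\<^esub> coh_class (Hgrp G N) (psi_of G q)"
      using H2_mult[OF Hgrp_monoid psiZ psiZ] pq by (simp add: psi_of_pmul)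
    also have "\<dots> = \<phi> A \<otimes>\<^bsub>GGN G N\<^esub> \<phi> B" using pq phi_cls by (simp add: multGGN)
    finally show "\<phi> (A \<otimes>\<^bsub>Lambda G N\<^esub> B) = \<phi> A \<otimes>\<^bsub>GGN G N\<^esub> \<phi> B" .
  qed
  have inj: "inj_on \<phi> (carrier (Lambda G N))"
  proof (rule inj_onI)
    fix A B assume "A \<in> carrier (Lambda G N)" "B \<in> carrier (Lambda G N)" and e: "\<phi> A = \<phi> B"
    then obtain p q where pq: "p \<in> Zpairs G N" "A = lam_class G N p" "q \<in> Zpairs G N" "B = lam_class G N q"
      by (auto simp: carrL)
    have "coh_class (Hgrp G N) (psi_of G p) = coh_class (Hgrp G N) (psi_of G q)" using e pq phi_cls by simp
    hence "cohomologous (Hgrp G N) (psi_of G p) (psi_of G q)" by (rule class_eqD[OF psiZ[OF pq(3)]])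
    hence "lam_equiv G N p q" by (rule coh_equiv'[OF pq(1,3)])
    thus "A = B" using pq lam_class_eq by simp
  qed
  have wc_img: "lam_class G N (lam_of G N \<psi>) \<in> carrier (Lambda G N) \<and>
      \<phi> (lam_class G N (lam_of G N \<psi>)) = coh_class (Hgrp G N) \<psi>" if w: "well_chosen G N \<psi>" for \<psi>
  proof -
    have Z: "lam_of G N \<psi> \<in> Zpairs G N" by (rule wc.lam_of_Z[OF wcI[OF w]])
    have "cohomologous (Hgrp G N) \<psi> (psi_of G (lam_of G N \<psi>))"
      by (rule coh_eq_on) (simp add: wc.psi_lam_of[OF wcI[OF w]])
    hence "coh_class (Hgrp G N) \<psi> = coh_class (Hgrp G N) (psi_of G (lam_of G N \<psi>))"
      by (rule class_eq[OF Hgrp_monoid])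
    thus ?thesis using Z phi_cls carrL by simp
  qed
  have surj: "\<phi> ` carrier (Lambda G N) = carrier (GGN G N)"
  proof
    show "\<phi> ` carrier (Lambda G N) \<subseteq> carrier (GGN G N)" using hom_carrier[OF hom] .
  next
    show "carrier (GGN G N) \<subseteq> \<phi> ` carrier (Lambda G N)"
    proof
      fix C assume "C \<in> carrier (GGN G N)"
      then obtain \<psi> where p: "\<psi> \<in> cocycles (Hgrp G N)" "C = coh_class (Hgrp G N) \<psi>"
        "cohomologous (Delta G) (\<lambda>x y. 1) \<psi>"
        "\<forall>n\<in>N. \<forall>n'\<in>N. beta (Hgrp G N) \<psi> (n, \<one>\<^bsub>G\<^esub>) (\<one>\<^bsub>G\<^esub>, n') = 1"
        by (auto simp: GGN_def GGN_carrier_def)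
      obtain \<psi>2 where w: "well_chosen G N \<psi>2" "cohomologous (Hgrp G N) \<psi> \<psi>2"
        using wc_exists[OF p(1,3,4)] by blast
      have "C = coh_class (Hgrp G N) \<psi>2" using p(2) class_eq[OF Hgrp_monoid w(2)] by simp
      thus "C \<in> \<phi> ` carrier (Lambda G N)" using wc_img[OF w(1)] by auto
    qed
  qed
  have iso: "\<phi> \<in> iso (Lambda G N) (GGN G N)"
    unfolding iso_def bij_betw_def using hom inj surj by simp
  have third: "inv_into (carrier (Lambda G N)) \<phi> (coh_class (Hgrp G N) \<psi>) = lam_class G N (lam_of G N \<psi>)"
    if "well_chosen G N \<psi>" for \<psi>
    using inv_into_f_eq[OF inj] wc_img[OF that] by blast
  show ?thesis using iso phi_cls third by blast
qed


end
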